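(* Let $k\ge1$ and let $\Gamma$ be a graph with minimum degree $k$. Then $\Gamma$ has a $k$-factor if and only if the inequality $$k|S|+\sum_{v\in T_H}(d_{\Gamma}(v)-k)\ \ge\ q(S,T)+e(S,T)$$ holds for every pair of disjoint sets $S,T\subseteq V(\Gamma)$ satisfying: (M1) $S\subseteq H$; and (M2) every component $Q$ counted by $q(S,T)$ satisfies $Q\cap H\neq\emptyset$.
   Context: A $k$-factor is a $k$-regular spanning subgraph. $H=H(\Gamma)$ is the set of vertices $v$ with $d_\Gamma(v)\ge k+1$ ("high vertices"), and $T_H=T\cap H$. For disjoint $S,T\subseteq V(\Gamma)$, $e(S,T)$ is the number of edges of $\Gamma$ between $S$ and $T$, and $q(S,T)$ is the number of connected components $Q$ of $\Gamma\setminus(S\cup T)$ such that $k|Q|$ and $e(Q,T)$ have different parity (these are the components "counted by $q(S,T)$"). *)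

theory Defs
  imports Main
begin

definition graph :: "'a set \<Rightarrow> ('a \<Rightarrow> 'a \<Rightarrow> bool) \<Rightarrow> bool" where
  "graph V E \<longleftrightarrow> finite V \<and> (\<forall>u v. E u v \<longrightarrow> u \<in> V \<and> v \<in> V)
     \<and> (\<forall>u v. E u v \<longrightarrow> E v u) \<and> (\<forall>v. \<not> E v v)"

definition degree :: "'a set \<Rightarrow> ('a \<Rightarrow> 'a \<Rightarrow> bool) \<Rightarrow> 'a \<Rightarrow> nat" where
  "degree V E v = card {u \<in> V. E v u}"

definition min_degree_eq :: "'a set \<Rightarrow> ('a \<Rightarrow> 'a \<Rightarrow> bool) \<Rightarrow> nat \<Rightarrow> bool" where
  "min_degree_eq V E k \<longleftrightarrow> (\<forall>v\<in>V. degree V E v \<ge> k) \<and> (\<exists>v\<in>V. degree V E v = k)"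

definition has_k_factor :: "'a set \<Rightarrow> ('a \<Rightarrow> 'a \<Rightarrow> bool) \<Rightarrow> nat \<Rightarrow> bool" where
  "has_k_factor V E k \<longleftrightarrow> (\<exists>F. (\<forall>u v. F u v \<longrightarrow> E u v) \<and> graph V F
       \<and> (\<forall>v\<in>V. degree V F v = k))"

definition high :: "'a set \<Rightarrow> ('a \<Rightarrow> 'a \<Rightarrow> bool) \<Rightarrow> nat \<Rightarrow> 'a set" where
  "high V E k = {v \<in> V. degree V E v \<ge> k + 1}"

definition edges_between :: "('a \<Rightarrow> 'a \<Rightarrow> bool) \<Rightarrow> 'a set \<Rightarrow> 'a set \<Rightarrow> nat" where
  "edges_between E S T = card {(s, t). s \<in> S \<and> t \<in> T \<and> E s t}"

definition components :: "'a set \<Rightarrow> ('a \<Rightarrow> 'a \<Rightarrow> bool) \<Rightarrow> 'a set set" where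
  "components W E = {C. \<exists>v\<in>W. C = {u \<in> W. (\<lambda>x y. x \<in> W \<and> y \<in> W \<and> E x y)\<^sup>*\<^sup>* v u}}"

definition odd_comps :: "'a set \<Rightarrow> ('a \<Rightarrow> 'a \<Rightarrow> bool) \<Rightarrow> nat \<Rightarrow> 'a set \<Rightarrow> 'a set \<Rightarrow> 'a set set" where
  "odd_comps V E k S T = {Q \<in> components (V - (S \<union> T)) E.
       odd (k * card Q + edges_between E Q T)}"

definition q :: "'a set \<Rightarrow> ('a \<Rightarrow> 'a \<Rightarrow> bool) \<Rightarrow> nat \<Rightarrow> 'a set \<Rightarrow> 'a set \<Rightarrow> nat" where
  "q V E k S T = card (odd_comps V E k S T)"

end

theory Submission
  imports Defs
begin

definition rel :: "'a set \<Rightarrow> ('a \<Rightarrow> 'a \<Rightarrow> bool) \<Rightarrow> 'a \<Rightarrow> 'a \<Rightarrow> bool" where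
  "rel W E = (\<lambda>x y. x \<in> W \<and> y \<in> W \<and> E x y)"

definition comp :: "'a set \<Rightarrow> ('a \<Rightarrow> 'a \<Rightarrow> bool) \<Rightarrow> 'a \<Rightarrow> 'a set" where
  "comp W E v = {u \<in> W. (rel W E)\<^sup>*\<^sup>* v u}"

lemma components_comp: "components W E = comp W E ` W"
  unfolding components_def comp_def rel_def by auto

lemma rel_sym: assumes "\<forall>u v. E u v \<longrightarrow> E v u" "(rel W E)\<^sup>*\<^sup>* x y" shows "(rel W E)\<^sup>*\<^sup>* y x"
  using assms(2)
proof (induction rule: rtranclp_induct)
  case base then show ?case by simp
next
  case (step y z)
  then have "rel W E z y" using assms(1) unfolding rel_def by auto
  then show ?case using step by (meson converse_rtranclp_into_rtranclp)
qed

lemma rel_mono: assumes "W \<subseteq> W'" "\<And>x y. x \<in> W \<Longrightarrow> y \<in> W \<Longrightarrow> E x y \<Longrightarrow> E' x y"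
   "(rel W E)\<^sup>*\<^sup>* x y" shows "(rel W' E')\<^sup>*\<^sup>* x y"
  using assms(3)
proof (induction rule: rtranclp_induct)
  case base then show ?case by simp
next
  case (step y z)
  then have "rel W' E' y z" using assms(1,2) unfolding rel_def by auto
  then show ?case using step by (meson rtranclp.rtrancl_into_rtrancl)
qed

lemma rel_in: "(rel W E)\<^sup>*\<^sup>* x y \<Longrightarrow> x \<noteq> y \<Longrightarrow> x \<in> W \<and> y \<in> W"
  by (induction rule: rtranclp_induct) (auto simp: rel_def)

lemma rel_in2: "(rel W E)\<^sup>*\<^sup>* x y \<Longrightarrow> x \<in> W \<Longrightarrow> y \<in> W"
  by (induction rule: rtranclp_induct) (auto simp: rel_def)

lemma comp_self: "v \<in> W \<Longrightarrow> v \<in> comp W E v"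
  unfolding comp_def by auto

lemma comp_sub: "comp W E v \<subseteq> W"
  unfolding comp_def by auto

lemma comp_eq: assumes sym: "\<forall>u v. E u v \<longrightarrow> E v u" and "u \<in> comp W E v"
  shows "comp W E u = comp W E v"
proof -
  have uv: "(rel W E)\<^sup>*\<^sup>* v u" using assms unfolding comp_def by auto
  then have vu: "(rel W E)\<^sup>*\<^sup>* u v" using rel_sym sym by metis
  show ?thesis unfolding comp_def using uv vu rtranclp_trans[of "rel W E" u v] rtranclp_trans[of "rel W E" v u]
    by blast
qed

lemma comp_mem_eq: assumes sym: "\<forall>u v. E u v \<longrightarrow> E v u" and "C \<in> components W E" and "u \<in> C"
  shows "C = comp W E u"
  using assms comp_eq[OF sym] unfolding components_comp by auto

lemma components_disj: assumes sym: "\<forall>u v. E u v \<longrightarrow> E v u"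
  and "C \<in> components W E" "D \<in> components W E" "C \<inter> D \<noteq> {}" shows "C = D"
  using assms comp_mem_eq[OF sym] by blast

lemma components_sub: "C \<in> components W E \<Longrightarrow> C \<subseteq> W"
  unfolding components_comp comp_def by auto

lemma components_ne: "C \<in> components W E \<Longrightarrow> C \<noteq> {}"
  unfolding components_comp using comp_self by fastforce

lemma components_Union: "\<Union> (components W E) = W"
  unfolding components_comp using comp_self comp_sub by fastforce

lemma components_finite: "finite W \<Longrightarrow> finite (components W E)"
  unfolding components_comp by simp

lemma card_components_sum: assumes sym: "\<forall>u v. E u v \<longrightarrow> E v u" and fin: "finite W"
  shows "card W = (\<Sum>C\<in>components W E. card C)"
proof -
  have "card (\<Union> (components W E)) = (\<Sum>C\<in>components W E. card C)"
    apply (rule card_Union_disjoint)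
    using components_disj[OF sym] components_finite[OF fin] 
      finite_subset[OF components_sub[of _ W E] fin]
    by (auto simp: pairwise_def disjnt_def)
  then show ?thesis using components_Union by metis
qed

definition closed :: "'a set \<Rightarrow> ('a \<Rightarrow> 'a \<Rightarrow> bool) \<Rightarrow> 'a set \<Rightarrow> bool" where
  "closed W E K \<longleftrightarrow> (\<forall>x y. x \<in> K \<longrightarrow> y \<in> W \<longrightarrow> E x y \<longrightarrow> y \<in> K)"

lemma closed_path: "(rel W E)\<^sup>*\<^sup>* x y \<Longrightarrow> closed W E K \<Longrightarrow> x \<in> K \<Longrightarrow> y \<in> K \<and> (rel K E)\<^sup>*\<^sup>* x y"
proof (induction rule: rtranclp_induct)
  case base then show ?case by simp
next
  case (step y z)
  then have "z \<in> K" unfolding closed_def rel_def by auto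
  then have "rel K E y z" using step unfolding rel_def by auto
  then show ?case using step \<open>z \<in> K\<close> by (meson rtranclp.rtrancl_into_rtrancl)
qed

lemma comp_closed: "closed W E (comp W E v)"
  unfolding closed_def comp_def rel_def by (auto intro: rtranclp.rtrancl_into_rtrancl)

lemma closed_comp_sub: "closed W E K \<Longrightarrow> v \<in> K \<Longrightarrow> comp W E v \<subseteq> K"
  unfolding comp_def using closed_path by fastforce

lemma component_char:
  assumes sym: "\<forall>u v. E u v \<longrightarrow> E v u"
  and "K \<subseteq> W" "v \<in> K" "closed W E K" "\<forall>u\<in>K. (rel W E)\<^sup>*\<^sup>* v u"
  shows "K \<in> components W E" "K = comp W E v"
proof -
  have "comp W E v \<subseteq> K" using assms closed_comp_sub by metis
  moreover have "K \<subseteq> comp W E v" using assms unfolding comp_def by auto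
  ultimately have "K = comp W E v" by auto
  then show "K \<in> components W E" "K = comp W E v" unfolding components_comp using assms by auto
qed

lemma components_closed: "C \<in> components W E \<Longrightarrow> closed W E C"
  unfolding components_comp using comp_closed by auto

lemma components_conn: assumes sym: "\<forall>u v. E u v \<longrightarrow> E v u"
  shows "C \<in> components W E \<Longrightarrow> u \<in> C \<Longrightarrow> v \<in> C \<Longrightarrow> (rel C E)\<^sup>*\<^sup>* u v"
proof -
  assume a: "C \<in> components W E" "u \<in> C" "v \<in> C"
  then have "C = comp W E u" using comp_mem_eq[OF sym] by auto
  then have "(rel W E)\<^sup>*\<^sup>* u v" using a unfolding comp_def by auto
  then show ?thesis using closed_path a components_closed by metis
qed

lemma invol_even:
  assumes "finite A" "\<forall>x\<in>A. f x \<in> A \<and> f x \<noteq> x \<and> f (f x) = x"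
  shows "even (card A)"
  using assms
proof (induction "card A" arbitrary: A rule: less_induct)
  case less
  show ?case
  proof (cases "A = {}")
    case True then show ?thesis by simp
  next
    case False
    then obtain x where x: "x \<in> A" by auto
    let ?B = "A - {x, f x}"
    have sub: "{x, f x} \<subseteq> A" using x less.prems by auto
    have c2: "card {x, f x} = 2" using x less.prems by auto
    have cB: "card ?B = card A - 2" using less.prems(1) sub c2 by (simp add: card_Diff_subset)
    have "card A \<ge> 2" using card_mono[OF less.prems(1) sub] c2 by simp
    then have lt: "card ?B < card A" using cB by simp
    have "\<forall>y\<in>?B. f y \<in> ?B \<and> f y \<noteq> y \<and> f (f y) = y"
    proof
      fix y assume y: "y \<in> ?B"
      have yA: "y \<in> A" using y by auto
      have fy: "f (f y) = y" using yA less.prems by auto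
      have fx: "f (f x) = x" using x less.prems by auto
      have "f y \<noteq> x"
      proof
        assume "f y = x" then have "f x = y" using fy by auto
        then show False using y by auto
      qed
      moreover have "f y \<noteq> f x"
      proof
        assume "f y = f x" then have "f (f y) = f (f x)" by simp
        then have "y = x" using fy fx by simp
        then show False using y by auto
      qed
      ultimately show "f y \<in> ?B \<and> f y \<noteq> y \<and> f (f y) = y" using y less.prems by auto
    qed
    then have "even (card ?B)" using less.hyps[OF lt] less.prems(1) by auto
    then show ?thesis using cB \<open>card A \<ge> 2\<close> by presburger
  qed
qed

definition pr :: "'a set \<Rightarrow> 'a set \<Rightarrow> ('a \<Rightarrow> 'a \<Rightarrow> bool) \<Rightarrow> ('a \<times> 'a) set" where
  "pr A B P = {(a, b). a \<in> A \<and> b \<in> B \<and> P a b}"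

lemma eb_pr: "edges_between E A B = card (pr A B E)"
  unfolding edges_between_def pr_def by simp

lemma pr_finite: "finite A \<Longrightarrow> finite B \<Longrightarrow> finite (pr A B P)"
  unfolding pr_def by (rule finite_subset[of _ "A \<times> B"]) auto

lemma card_pr_sum: "finite A \<Longrightarrow> finite B \<Longrightarrow> card (pr A B P) = (\<Sum>a\<in>A. card {b\<in>B. P a b})"
proof -
  assume f: "finite A" "finite B"
  have "pr A B P = Sigma A (\<lambda>a. {b\<in>B. P a b})" unfolding pr_def by auto
  then show ?thesis using f by (simp add: card_SigmaI)
qed

lemma pr_even: assumes "finite A" "\<forall>u v. P u v \<longrightarrow> P v u" "\<forall>v. \<not> P v v"
  shows "even (card (pr A A P))"
proof (rule invol_even[where f = "\<lambda>(a,b). (b,a)"])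
  show "finite (pr A A P)" using assms(1) pr_finite by auto
  show "\<forall>x\<in>pr A A P. (case x of (a, b) \<Rightarrow> (b, a)) \<in> pr A A P \<and> (case x of (a, b) \<Rightarrow> (b, a)) \<noteq> x \<and>
       (case case x of (a, b) \<Rightarrow> (b, a) of (a, b) \<Rightarrow> (b, a)) = x"
    using assms(2,3) unfolding pr_def by auto
qed

lemma card_pr_swap: "card (pr A B P) = card (pr B A (\<lambda>x y. P y x))"
proof -
  have "pr B A (\<lambda>x y. P y x) = (\<lambda>(a,b). (b,a)) ` pr A B P" unfolding pr_def by auto
  moreover have "inj_on (\<lambda>(a,b). (b,a)) (pr A B P)" by (auto simp: inj_on_def)
  ultimately show ?thesis by (simp add: card_image)
qed

definition pm :: "'a set \<Rightarrow> ('a \<Rightarrow> 'a \<Rightarrow> bool) \<Rightarrow> ('a \<Rightarrow> 'a) \<Rightarrow> bool" where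
  "pm V E m \<longleftrightarrow> (\<forall>v\<in>V. m v \<in> V \<and> m v \<noteq> v \<and> m (m v) = v \<and> E v (m v))"

definition addE :: "('a \<Rightarrow> 'a \<Rightarrow> bool) \<Rightarrow> 'a \<Rightarrow> 'a \<Rightarrow> 'a \<Rightarrow> 'a \<Rightarrow> bool" where
  "addE E a c = (\<lambda>x y. E x y \<or> (x = a \<and> y = c) \<or> (x = c \<and> y = a))"

primrec walk :: "('a \<Rightarrow> 'a) \<Rightarrow> ('a \<Rightarrow> 'a) \<Rightarrow> 'a \<Rightarrow> nat \<Rightarrow> 'a" where
  "walk m1 m2 d 0 = d"
| "walk m1 m2 d (Suc n) = (if even n then m1 (walk m1 m2 d n) else m2 (walk m1 m2 d n))"

lemma walk_V: "pm V E1 m1 \<Longrightarrow> pm V E2 m2 \<Longrightarrow> d \<in> V \<Longrightarrow> walk m1 m2 d n \<in> V"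
  by (induction n) (auto simp: pm_def)

lemma walk_back1: assumes "pm V E1 m1" "pm V E2 m2" "d \<in> V" "odd n"
  shows "m1 (walk m1 m2 d n) = walk m1 m2 d (n - 1)"
proof -
  obtain j where j0: "n = Suc j" using assms(4) by (cases n) auto
  then have j: "n = Suc j" "even j" using assms(4) by auto
  then show ?thesis using walk_V[OF assms(1,2,3), of j] assms(1) unfolding pm_def by auto
qed

lemma walk_back2: assumes "pm V E1 m1" "pm V E2 m2" "d \<in> V" "even n" "n > 0"
  shows "m2 (walk m1 m2 d n) = walk m1 m2 d (n - 1)"
proof -
  obtain j where j: "n = Suc j" using assms(5) gr0_implies_Suc by blast
  then have "odd j" using assms(4) by auto
  then show ?thesis using j walk_V[OF assms(1,2,3), of j] assms(2) unfolding pm_def by auto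
qed

lemma pm_other: assumes "pm V (addE E a c) m" "\<not> (m a = c)" "\<forall>u v. E u v \<longrightarrow> E v u"
  shows "pm V E m"
  unfolding pm_def
proof
  fix v assume v: "v \<in> V"
  have h: "m v \<in> V \<and> m v \<noteq> v \<and> m (m v) = v \<and> addE E a c v (m v)" using assms(1) v unfolding pm_def by auto
  have "E v (m v)"
  proof -
    have "v = a \<and> m v = c \<longrightarrow> False" using assms(2) by auto
    moreover have "v = c \<and> m v = a \<longrightarrow> False" using assms(2) h by auto
    ultimately show ?thesis using h unfolding addE_def by auto
  qed
  then show "m v \<in> V \<and> m v \<noteq> v \<and> m (m v) = v \<and> E v (m v)" using h by auto
qed


lemma case2:
  assumes g: "graph V E" and V: "a \<in> V" "b \<in> V" "c \<in> V" "d \<in> V"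
  and ab: "E a b" and bc: "E b c" and nac: "\<not> E a c" and nbd: "\<not> E b d" and bd: "b \<noteq> d"
  and M1: "pm V (addE E a c) m1" and M2: "pm V (addE E b d) m2"
  shows "\<exists>m. pm V E m"
proof -
  have sym: "\<forall>u v. E u v \<longrightarrow> E v u" and irr: "\<forall>v. \<not> E v v" using g unfolding graph_def by auto
  show ?thesis
  proof (cases "m1 a = c \<and> m2 b = d")
    case False
    then show ?thesis using pm_other[OF M1 _ sym] pm_other[OF M2 _ sym] by blast
  next
    case True
    then have m1a: "m1 a = c" and m2b: "m2 b = d" by auto
    have m1c: "m1 c = a" using M1 V m1a unfolding pm_def by metis
    have m2d: "m2 d = b" using M2 V m2b unfolding pm_def by metis
    have ab': "a \<noteq> b" "c \<noteq> b" using ab bc irr by auto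
    have da: "d \<noteq> a" "d \<noteq> c" using ab bc nbd sym by auto
    have ac: "a \<noteq> c" using M1 V m1a unfolding pm_def by auto
    define x where "x = walk m1 m2 d"
    have xV: "\<And>n. x n \<in> V" unfolding x_def using walk_V[OF M1 M2 V(4)] .
    have x0: "x 0 = d" unfolding x_def by simp
    have xe: "\<And>n. even n \<Longrightarrow> x (Suc n) = m1 (x n)" unfolding x_def by simp
    have xo: "\<And>n. odd n \<Longrightarrow> x (Suc n) = m2 (x n)" unfolding x_def by simp
    have xb1: "\<And>n. odd n \<Longrightarrow> m1 (x n) = x (n - 1)" unfolding x_def using walk_back1[OF M1 M2 V(4)] by blast
    have xb2: "\<And>n. even n \<Longrightarrow> n > 0 \<Longrightarrow> m2 (x n) = x (n - 1)" unfolding x_def using walk_back2[OF M1 M2 V(4)] by blast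
    have m1p: "\<And>y. y \<in> V \<Longrightarrow> m1 y \<in> V \<and> m1 y \<noteq> y \<and> m1 (m1 y) = y \<and> addE E a c y (m1 y)"
      using M1 unfolding pm_def by auto
    have m2p: "\<And>y. y \<in> V \<Longrightarrow> m2 y \<in> V \<and> m2 y \<noteq> y \<and> m2 (m2 y) = y \<and> addE E b d y (m2 y)"
      using M2 unfolding pm_def by auto
    define bad where "bad n \<longleftrightarrow> (x n = a \<and> x (Suc n) = c) \<or> (x n = c \<and> x (Suc n) = a)
       \<or> (x n = b \<and> x (Suc n) = d) \<or> (x n = d \<and> x (Suc n) = b)" for n
    have stepE: "E (x n) (x (Suc n))" if "\<not> bad n" for n
    proof (cases "even n")
      case True
      then have "addE E a c (x n) (x (Suc n))" using xe m1p xV by auto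
      then show ?thesis using that unfolding addE_def bad_def by auto
    next
      case False
      then have "addE E b d (x n) (x (Suc n))" using xo m2p xV by auto
      then show ?thesis using that unfolding addE_def bad_def by auto
    qed
    have bad_even: "(x n = a \<and> x (Suc n) = c) \<or> (x n = c \<and> x (Suc n) = a)" if "bad n" "even n" for n
    proof -
      have "addE E a c (x n) (x (Suc n))" using xe m1p xV that(2) by auto
      then show ?thesis using that(1) nbd sym ab' bd unfolding addE_def bad_def by auto
    qed
    have bad_odd: "(x n = b \<and> x (Suc n) = d) \<or> (x n = d \<and> x (Suc n) = b)" if "bad n" "odd n" for n
    proof -
      have "addE E b d (x n) (x (Suc n))" using xo m2p xV that(2) by auto
      then show ?thesis using that(1) nac sym ab' da unfolding addE_def bad_def by auto
    qed
    have exbad: "\<exists>n. bad n"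
    proof (rule ccontr)
      assume nb: "\<not> (\<exists>n. bad n)"
      define C where "C = range x"
      have finC: "finite C" using xV finite_subset[of C V] g unfolding C_def graph_def by auto
      have "even (card C)"
      proof (rule invol_even[OF finC, of m1], intro ballI)
        fix y assume "y \<in> C"
        then obtain i where i: "y = x i" unfolding C_def by auto
        have "m1 y \<in> C"
        proof (cases "even i")
          case True then show ?thesis using i xe[of i] unfolding C_def by (metis rangeI)
        next
          case False then show ?thesis using i xb1[of i] unfolding C_def by (metis rangeI)
        qed
        then show "m1 y \<in> C \<and> m1 y \<noteq> y \<and> m1 (m1 y) = y" using m1p xV i by auto
      qed
      have bC: "b \<notin> C"
      proof
        assume "b \<in> C"
        then obtain j where j: "b = x j" unfolding C_def by auto
        show False
        proof (cases "even j")
          case True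
          show False
          proof (cases "j = 0")
            case True then show False using j x0 bd by auto
          next
            case False
            then have "x (j - 1) = d" using xb2[of j] \<open>even j\<close> j m2b by auto
            then have "bad (j - 1)" using j False unfolding bad_def by auto
            then show False using nb by auto
          qed
        next
          case False
          then have "x (Suc j) = d" using xo j m2b by auto
          then have "bad j" using j unfolding bad_def by auto
          then show False using nb by auto
        qed
      qed
      have dC: "d \<in> C" using x0 unfolding C_def by (metis rangeI)
      have "even (card (C - {d}))"
      proof (rule invol_even[of _ m2], use finC in simp, intro ballI)
        fix y assume y: "y \<in> C - {d}"
        then obtain i where i: "y = x i" unfolding C_def by auto
        have i0: "i > 0" using i y x0 by (cases i) auto
        have "m2 y \<in> C"
        proof (cases "even i")
          case True then show ?thesis using i xb2[of i] i0 unfolding C_def by (metis rangeI)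
        next
          case False then show ?thesis using i xo[of i] unfolding C_def by (metis rangeI)
        qed
        moreover have "m2 y \<noteq> d"
        proof
          assume "m2 y = d"
          moreover have "y \<in> V" using xV i by auto
          ultimately have "y = b" using m2p[of y] m2d by auto
          then show False using bC y by auto
        qed
        ultimately show "m2 y \<in> C - {d} \<and> m2 y \<noteq> y \<and> m2 (m2 y) = y" using m2p xV i by auto
      qed
      moreover have "card C = Suc (card (C - {d}))" using dC finC
        by (metis card_Suc_Diff1)
      ultimately show False using \<open>even (card C)\<close> by auto
    qed
    define t where "t = (LEAST n. bad n)"
    have badt: "bad t" unfolding t_def using exbad by (metis LeastI)
    have tmin: "\<And>n. n < t \<Longrightarrow> \<not> bad n" unfolding t_def using not_less_Least by blast
    define C where "C = x ` {..t}"
    have finC: "finite C" unfolding C_def by simp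
    have dC: "d \<in> C" using x0 unfolding C_def by force
    have CV: "C \<subseteq> V" using xV unfolding C_def by auto
    have xC: "\<And>i. i \<le> t \<Longrightarrow> x i \<in> C" unfolding C_def by auto
    show ?thesis
    proof (cases "even t")
      case False
      have tt: "(x t = b \<and> x (Suc t) = d) \<or> (x t = d \<and> x (Suc t) = b)" using bad_odd badt False by auto
      have m1C: "m1 y \<in> C" if yC: "y \<in> C" for y
      proof -
        obtain i where i: "i \<le> t" "y = x i" using yC unfolding C_def by auto
        show ?thesis
        proof (cases "even i")
          case True
          then have "i < t" using i False by (metis le_neq_implies_less)
          then show ?thesis using i xe[of i] True xC[of "Suc i"] by auto
        next
          case odd: False
          then show ?thesis using i xb1[of i] xC[of "i - 1"] by auto
        qed
      qed
      have m2C': "m2 y \<in> C \<or> m2 y = b" if yC: "y \<in> C" for y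
      proof -
        obtain i where i: "i \<le> t" "y = x i" using yC unfolding C_def by auto
        show ?thesis
        proof (cases "even i")
          case True
          show ?thesis
          proof (cases "i = 0")
            case True then show ?thesis using i x0 m2d by auto
          next
            case False
            then show ?thesis using i xb2[of i] \<open>even i\<close> xC[of "i - 1"] by auto
          qed
        next
          case odd: False
          show ?thesis
          proof (cases "i = t")
            case True
            then show ?thesis using tt i xo[of i] odd dC by auto
          next
            case False
            then have "Suc i \<le> t" using i by auto
            then show ?thesis using i xo[of i] odd xC[of "Suc i"] by auto
          qed
        qed
      qed
      have bC: "b \<in> C"
      proof (rule ccontr)
        assume bC: "b \<notin> C"
        have "even (card C)"
          by (rule invol_even[OF finC, of m1]) (use m1C m1p CV in blast)
        moreover have "even (card (C - {d}))"
        proof (rule invol_even[of _ m2], use finC in simp, intro ballI)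
          fix y assume y: "y \<in> C - {d}"
          have yV: "y \<in> V" using y CV by auto
          have "m2 y \<noteq> b"
          proof
            assume "m2 y = b" then have "y = d" using m2p[OF yV] m2b by metis
            then show False using y by auto
          qed
          then have "m2 y \<in> C" using m2C' y by auto
          moreover have "m2 y \<noteq> d"
          proof
            assume "m2 y = d" then have "y = b" using m2p[OF yV] m2d by metis
            then show False using y bC by auto
          qed
          ultimately show "m2 y \<in> C - {d} \<and> m2 y \<noteq> y \<and> m2 (m2 y) = y" using m2p[OF yV] by auto
        qed
        moreover have "card C = Suc (card (C - {d}))" using dC finC by (metis card_Suc_Diff1)
        ultimately show False by auto
      qed
      have m2C: "m2 y \<in> C" if "y \<in> C" for y using m2C' that bC by auto
      have acC: "v \<notin> C" if v: "v = a \<or> v = c" for v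
      proof
        assume "v \<in> C"
        then obtain i where i: "i \<le> t" "v = x i" unfolding C_def by auto
        have mv: "m1 v = (if v = a then c else a)" using v m1a m1c by auto
        show False
        proof (cases "even i")
          case True
          then have "i < t" using i False by (metis le_neq_implies_less)
          moreover have "bad i" using xe[of i] True i mv v ac unfolding bad_def by auto
          ultimately show False using tmin by auto
        next
          case odd: False
          then have "i - 1 < t" using i by (cases i) auto
          moreover have "x (i - 1) = m1 v" using xb1[of i] odd i by auto
          moreover have "Suc (i - 1) = i" using odd by (cases i) auto
          ultimately have "bad (i - 1)" using i mv v ac unfolding bad_def by (metis)
          then show False using tmin \<open>i - 1 < t\<close> by auto
        qed
      qed
      define m where "m y = (if y \<in> C then m1 y else m2 y)" for y
      have "pm V E m"
        unfolding pm_def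
      proof
        fix y assume yV: "y \<in> V"
        show "m y \<in> V \<and> m y \<noteq> y \<and> m (m y) = y \<and> E y (m y)"
        proof (cases "y \<in> C")
          case True
          have "y \<noteq> a" "y \<noteq> c" using acC True by auto
          then show ?thesis using m1p[OF yV] m1C[OF True] True unfolding m_def addE_def by auto
        next
          case False
          have "m2 y \<notin> C" using m2C m2p[OF yV] False by metis
          moreover have "y \<noteq> b" "y \<noteq> d" using False bC dC by auto
          ultimately show ?thesis using m2p[OF yV] False unfolding m_def addE_def by auto
        qed
      qed
      then show ?thesis by auto
    next
      case True
      have tt: "(x t = a \<and> x (Suc t) = c) \<or> (x t = c \<and> x (Suc t) = a)" using bad_even badt True by auto
      define v where "v = x t"
      have vC: "v \<in> C" unfolding v_def C_def by auto
      have vac: "v = a \<or> v = c" using tt v_def by auto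
      have m1v: "m1 v = (if v = a then c else a)" using vac m1a m1c by auto
      have vV: "v \<in> V" using vC CV by auto
      have m1vC: "m1 v \<notin> C"
      proof
        assume "m1 v \<in> C"
        then obtain j where j: "j \<le> t" "m1 v = x j" unfolding C_def by auto
        show False
        proof (cases "even j")
          case ev: True
          show False
          proof (cases "j = t")
            case True then show False using j m1p[OF vV] v_def by auto
          next
            case False
            then have "j < t" using j by auto
            moreover have "x (Suc j) = v" using xe[of j] ev j m1p[OF vV] by auto
            ultimately show False using tmin[of j] j m1v vac ac unfolding bad_def by (auto split: if_splits)
          qed
        next
          case odd: False
          then have "j - 1 < t" using j by (cases j) auto
          moreover have "x (j - 1) = v" using xb1[of j] odd j m1p[OF vV] by auto
          moreover have "Suc (j - 1) = j" using odd by (cases j) auto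
          ultimately have "bad (j - 1)" using j m1v vac ac unfolding bad_def by (auto split: if_splits)
          then show False using tmin \<open>j - 1 < t\<close> by auto
        qed
      qed
      have bC: "b \<notin> C"
      proof
        assume "b \<in> C"
        then obtain j where j: "j \<le> t" "b = x j" unfolding C_def by auto
        show False
        proof (cases "even j")
          case ev: True
          show False
          proof (cases "j = 0")
            case True then show False using j x0 bd by auto
          next
            case False
            then have "x (j - 1) = d" using xb2[of j] ev j m2b by auto
            moreover have "Suc (j - 1) = j" using False by auto
            ultimately have "bad (j - 1)" using j unfolding bad_def by metis
            moreover have "j - 1 < t" using j False by auto
            ultimately show False using tmin by auto
          qed
        next
          case odd: False
          then have "j \<noteq> t" using True by auto
          then have "j < t" using j by auto
          moreover have "x (Suc j) = d" using xo j m2b odd by auto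
          ultimately show False using tmin[of j] j unfolding bad_def by auto
        qed
      qed
      have m1C: "m1 y \<in> C - {v} \<and> E y (m1 y)" if y: "y \<in> C - {v}" for y
      proof -
        obtain i where i: "i \<le> t" "y = x i" using y unfolding C_def by auto
        have "i \<noteq> t" using y i v_def by auto
        then have it: "i < t" using i by auto
        have yV: "y \<in> V" using y CV by auto
        have "m1 y \<noteq> v"
        proof
          assume "m1 y = v" then have "y = m1 v" using m1p[OF yV] by metis
          then show False using m1vC y by auto
        qed
        moreover have "m1 y \<in> C \<and> E y (m1 y)"
        proof (cases "even i")
          case True
          have "m1 y = x (Suc i)" using xe[of i] True i by auto
          moreover have "Suc i \<le> t" using it by auto
          moreover have "E (x i) (x (Suc i))" using stepE tmin it by auto
          ultimately show ?thesis using i xC[of "Suc i"] by auto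
        next
          case odd: False
          have "m1 y = x (i - 1)" using xb1[of i] odd i by auto
          moreover have "Suc (i - 1) = i" using odd by (cases i) auto
          moreover have "i - 1 < t" using it by auto
          ultimately have "m1 y \<in> C" "E (x (i - 1)) y" using stepE[of "i - 1"] tmin[of "i - 1"] i xC[of "i - 1"] by auto
          then show ?thesis using sym \<open>m1 y = x (i - 1)\<close> by auto
        qed
        ultimately show ?thesis by auto
      qed
      have m2C: "m2 y \<notin> C \<and> m2 y \<noteq> b" if y: "y \<notin> C" "y \<noteq> b" "y \<in> V" for y
      proof -
        have "m2 y \<noteq> b"
        proof
          assume "m2 y = b" then have "y = d" using m2p[OF y(3)] m2b by metis
          then show False using y dC by auto
        qed
        moreover have "m2 y \<notin> C"
        proof
          assume "m2 y \<in> C"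
          then obtain i where i: "i \<le> t" "m2 y = x i" unfolding C_def by auto
          have yy: "y = m2 (x i)" using i m2p[OF y(3)] by metis
          show False
          proof (cases "even i")
            case ev: True
            show False
            proof (cases "i = 0")
              case True then show False using yy x0 m2d y by auto
            next
              case False
              then have "y = x (i - 1)" using yy xb2[of i] ev by auto
              moreover have "x (i - 1) \<in> C" using xC[of "i - 1"] i by simp
              ultimately show False using y by auto
            qed
          next
            case odd: False
            then have "i \<noteq> t" using True by auto
            then have "Suc i \<le> t" using i by auto
            moreover have "y = x (Suc i)" using yy xo[of i] odd by auto
            ultimately show False using y xC[of "Suc i"] by auto
          qed
        qed
        ultimately show ?thesis by auto
      qed
      have Evb: "E v b" using vac ab bc sym by auto
      define m where "m y = (if y = v then b else if y = b then v else if y \<in> C then m1 y else m2 y)" for y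
      have vb: "v \<noteq> b" using vC bC by auto
      have "pm V E m"
        unfolding pm_def
      proof
        fix y assume yV: "y \<in> V"
        show "m y \<in> V \<and> m y \<noteq> y \<and> m (m y) = y \<and> E y (m y)"
        proof (cases "y = v")
          case True then show ?thesis using vb V Evb unfolding m_def by auto
        next
          case nv: False
          show ?thesis
          proof (cases "y = b")
            case True then show ?thesis using vb vV Evb sym unfolding m_def by auto
          next
            case nb: False
            show ?thesis
            proof (cases "y \<in> C")
              case True
              then have h: "m1 y \<in> C - {v} \<and> E y (m1 y)" using m1C nv by auto
              then have "m1 y \<noteq> b" using bC by auto
              then show ?thesis using h m1p[OF yV] True nv nb unfolding m_def by auto
            next
              case False
              have h: "m2 y \<notin> C \<and> m2 y \<noteq> b" using m2C False nb yV by auto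
              then have "m2 y \<noteq> v" using vC by auto
              moreover have "y \<noteq> d" using False dC by auto
              ultimately show ?thesis using h m2p[OF yV] False nv nb unfolding m_def addE_def by auto
            qed
          qed
        qed
      qed
      then show ?thesis by auto
    qed
  qed
qed

definition oddc :: "'a set \<Rightarrow> ('a \<Rightarrow> 'a \<Rightarrow> bool) \<Rightarrow> nat" where
  "oddc W E = card {C \<in> components W E. odd (card C)}"

definition tutte :: "'a set \<Rightarrow> ('a \<Rightarrow> 'a \<Rightarrow> bool) \<Rightarrow> bool" where
  "tutte V E \<longleftrightarrow> (\<forall>X \<subseteq> V. oddc (V - X) E \<le> card X)"

lemma even_sum_card: "finite A \<Longrightarrow> even (sum f A) = even (card {x\<in>A. odd (f x :: nat)})"
proof (induction A rule: finite_induct)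
  case empty then show ?case by simp
next
  case (insert a A)
  have "{x\<in>insert a A. odd (f x)} = (if odd (f a) then insert a {x\<in>A. odd (f x)} else {x\<in>A. odd (f x)})"
    by auto
  then show ?case using insert by auto
qed

lemma comp_mono: assumes "\<forall>x y. E x y \<longrightarrow> E' x y" shows "comp W E v \<subseteq> comp W E' v"
  unfolding comp_def using rel_mono[of W W E E'] assms by auto

lemma oddc_mono:
  assumes sym: "\<forall>u v. E u v \<longrightarrow> E v u" and sym': "\<forall>u v. E' u v \<longrightarrow> E' v u"
  and sub: "\<forall>x y. E x y \<longrightarrow> E' x y" and fin: "finite W"
  shows "oddc W E' \<le> oddc W E"
proof -
  let ?O' = "{C \<in> components W E'. odd (card C)}"
  let ?O = "{C \<in> components W E. odd (card C)}"
  have key: "\<exists>C. C \<in> ?O \<and> C \<subseteq> C'" if C'O: "C' \<in> ?O'" for C'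
  proof (rule ccontr)
    assume nex: "\<not> (\<exists>C. C \<in> ?O \<and> C \<subseteq> C')"
    let ?A = "{C \<in> components W E. C \<subseteq> C'}"
    have "C' \<subseteq> \<Union> ?A"
    proof
      fix x assume x: "x \<in> C'"
      have xW: "x \<in> W" using x C'O components_sub by blast
      have "C' = comp W E' x" using comp_mem_eq[OF sym'] C'O x by auto
      then have "comp W E x \<subseteq> C'" using comp_mono[OF sub] by auto
      moreover have "comp W E x \<in> components W E" using xW unfolding components_comp by auto
      ultimately show "x \<in> \<Union> ?A" using comp_self[OF xW] by auto
    qed
    then have eq: "C' = \<Union> ?A" by auto
    have finA: "finite ?A" using components_finite[OF fin] by auto
    have "card (\<Union> ?A) = sum card ?A"
      apply (rule card_Union_disjoint)
      using components_disj[OF sym] finite_subset[OF components_sub[of _ W E] fin]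
      by (auto simp: pairwise_def disjnt_def)
    moreover have "even (sum card ?A)"
      by (rule dvd_sum) (use nex in auto)
    ultimately show False using eq C'O by auto
  qed
  have key': "\<forall>C'\<in>?O'. \<exists>C. C \<in> ?O \<and> C \<subseteq> C'" using key by blast
  obtain g where g: "\<forall>C'\<in>?O'. g C' \<in> ?O \<and> g C' \<subseteq> C'" using bchoice[OF key'] by blast
  have "inj_on g ?O'"
  proof (rule inj_onI)
    fix C1 C2 assume c: "C1 \<in> ?O'" "C2 \<in> ?O'" "g C1 = g C2"
    then have "g C1 \<noteq> {}" using g components_ne by blast
    then have "C1 \<inter> C2 \<noteq> {}" using g c by blast
    then show "C1 = C2" using components_disj[OF sym'] c by blast
  qed
  moreover have "finite ?O" using components_finite[OF fin] by auto
  moreover have "g ` ?O' \<subseteq> ?O" using g by blast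
  ultimately have "card ?O' \<le> card ?O" using card_inj_on_le by blast
  then show ?thesis unfolding oddc_def .
qed

lemma addE_sym: "\<forall>u v. E u v \<longrightarrow> E v u \<Longrightarrow> \<forall>u v. addE E a c u v \<longrightarrow> addE E a c v u"
  unfolding addE_def by auto

lemma tutte_add: assumes "graph V E" "tutte V E" shows "tutte V (addE E a c)"
  unfolding tutte_def
proof (intro allI impI)
  fix X assume X: "X \<subseteq> V"
  have sym: "\<forall>u v. E u v \<longrightarrow> E v u" and fin: "finite V" using assms unfolding graph_def by auto
  have "oddc (V - X) (addE E a c) \<le> oddc (V - X) E"
    by (rule oddc_mono[OF sym addE_sym[OF sym]]) (use fin in \<open>auto simp: addE_def\<close>)
  also have "\<dots> \<le> card X" using assms(2) X unfolding tutte_def by auto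
  finally show "oddc (V - X) (addE E a c) \<le> card X" .
qed

lemma tutte_even: assumes "graph V E" "tutte V E" shows "even (card V)"
proof -
  have sym: "\<forall>u v. E u v \<longrightarrow> E v u" and fin: "finite V" using assms unfolding graph_def by auto
  have h: "\<forall>X\<subseteq>V. oddc (V - X) E \<le> card X" using assms(2) unfolding tutte_def by simp
  have "oddc V E \<le> 0" using h[rule_format, of "{}"] by simp
  then have "card {C \<in> components V E. odd (card C)} = 0" unfolding oddc_def by auto
  then have "{C \<in> components V E. odd (card C)} = {}" using components_finite[OF fin, of E] by auto
  then have "even (sum card (components V E))"
    by (intro dvd_sum) auto
  then show ?thesis using card_components_sum[OF sym fin] by auto
qed

lemma clique_pm: "finite A \<Longrightarrow> even (card A) \<Longrightarrow> (\<forall>x\<in>A. \<forall>y\<in>A. x \<noteq> y \<longrightarrow> E x y) \<Longrightarrow> \<exists>m. pm A E m"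
proof (induction "card A" arbitrary: A rule: less_induct)
  case less
  show ?case
  proof (cases "A = {}")
    case True then show ?thesis unfolding pm_def by auto
  next
    case False
    then obtain x where x: "x \<in> A" by auto
    have "card A \<noteq> 1" using less.prems by auto
    have "A - {x} \<noteq> {}"
    proof
      assume "A - {x} = {}" then have "A = {x}" using x by auto
      then show False using \<open>card A \<noteq> 1\<close> by auto
    qed
    then obtain y where y: "y \<in> A" "y \<noteq> x" by auto
    let ?B = "A - {x, y}"
    have cB: "card ?B = card A - 2" using x y less.prems(1) by (subst card_Diff_subset) auto
    have "card A \<ge> 2" using card_mono[OF less.prems(1), of "{x,y}"] x y by auto
    then have lt: "card ?B < card A" using cB by auto
    have "even (card ?B)" using cB less.prems(2) \<open>card A \<ge> 2\<close> by auto
    then obtain m where m: "pm ?B E m" using less.hyps[OF lt] less.prems by auto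
    define m' where "m' = (m(x := y))(y := x)"
    have "pm A E m'"
      unfolding pm_def
    proof
      fix v assume v: "v \<in> A"
      show "m' v \<in> A \<and> m' v \<noteq> v \<and> m' (m' v) = v \<and> E v (m' v)"
      proof (cases "v = x \<or> v = y")
        case True then show ?thesis using x y less.prems(3) unfolding m'_def by auto
      next
        case False
        then have "v \<in> ?B" using v by auto
        then have h: "m v \<in> ?B \<and> m v \<noteq> v \<and> m (m v) = v \<and> E v (m v)" using m unfolding pm_def by blast
        then show ?thesis using False unfolding m'_def by auto
      qed
    qed
    then show ?thesis by auto
  qed
qed

lemma p3: assumes sym: "\<forall>u v. E u v \<longrightarrow> E v u" and C: "C \<in> components W E"
  and xy: "x \<in> C" "y \<in> C" "x \<noteq> y" "\<not> E x y"
  shows "\<exists>z w. z \<in> W \<and> w \<in> W \<and> E x z \<and> E z w \<and> \<not> E x w \<and> x \<noteq> w"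
proof -
  have p: "(rel W E)\<^sup>*\<^sup>* x y" using C xy comp_mem_eq[OF sym C] unfolding comp_def by auto
  let ?N = "{u. u = x \<or> E x u}"
  have gen: "(rel W E)\<^sup>*\<^sup>* x u \<Longrightarrow> u \<notin> ?N \<Longrightarrow> \<exists>z w. z \<in> ?N \<and> rel W E z w \<and> w \<notin> ?N" for u
  proof (induction rule: rtranclp_induct)
    case base then show ?case by auto
  next
    case (step u' u)
    show ?case
    proof (cases "u' \<in> ?N")
      case True then show ?thesis using step by blast
    next
      case False then show ?thesis using step by blast
    qed
  qed
  obtain z w where zw: "z \<in> ?N" "rel W E z w" "w \<notin> ?N" using gen[OF p] xy by auto
  have "z \<noteq> x" using zw by (auto simp: rel_def)
  then show ?thesis using zw unfolding rel_def by auto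
qed

lemma case1:
  assumes g: "graph V E" and tu: "tutte V E"
  and S: "S = {v\<in>V. \<forall>w\<in>V. w \<noteq> v \<longrightarrow> E v w}"
  and cl: "\<forall>C\<in>components (V - S) E. \<forall>x\<in>C. \<forall>y\<in>C. x \<noteq> y \<longrightarrow> E x y"
  shows "\<exists>m. pm V E m"
proof -
  have sym: "\<forall>u v. E u v \<longrightarrow> E v u" and fin: "finite V" and irr: "\<forall>v. \<not> E v v"
    using g unfolding graph_def by auto
  have SV: "S \<subseteq> V" using S by auto
  have finS: "finite S" using SV fin finite_subset by auto
  let ?W = "V - S"
  let ?O = "{C \<in> components ?W E. odd (card C)}"
  have finW: "finite ?W" using fin by auto
  have finO: "finite ?O" using components_finite[OF finW] by auto
  have cO: "card ?O \<le> card S" using tu SV unfolding tutte_def oddc_def by auto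
  obtain \<sigma> where \<sigma>: "\<sigma> ` ?O \<subseteq> S" "inj_on \<sigma> ?O" using card_le_inj[OF finO finS cO] by auto
  define r where "r C = (SOME x. x \<in> C)" for C :: "'a set"
  have rC: "r C \<in> C" if "C \<in> components ?W E" for C
    using components_ne[OF that] unfolding r_def by (simp add: some_in_eq)
  define K where "K C = (if odd (card C) then C - {r C} else C)" for C
  have Kpm: "\<exists>m. pm (K C) E m" if C: "C \<in> components ?W E" for C
  proof (rule clique_pm)
    have finC: "finite C" using components_sub[OF C] finW finite_subset by auto
    show "finite (K C)" unfolding K_def using finC by auto
    show "even (card (K C))" unfolding K_def using rC[OF C] finC
      by (auto simp: card_Diff_singleton)
    show "\<forall>x\<in>K C. \<forall>y\<in>K C. x \<noteq> y \<longrightarrow> E x y" using cl C unfolding K_def by auto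
  qed
  have Kpm': "\<forall>C\<in>components ?W E. \<exists>m. pm (K C) E m" using Kpm by blast
  obtain mK where mK: "\<forall>C\<in>components ?W E. pm (K C) E (mK C)" using bchoice[OF Kpm'] by blast
  let ?S' = "S - \<sigma> ` ?O"
  have cardV: "card V = card S + card ?W"
  proof -
    have "card ?W = card V - card S" using card_Diff_subset[OF finS SV] .
    moreover have "card S \<le> card V" using card_mono[OF fin SV] .
    ultimately show ?thesis by simp
  qed
  have "even (card ?W) = even (card ?O)"
    using card_components_sum[OF sym finW] even_sum_card[OF components_finite[OF finW], of card]
    by simp
  moreover have "even (card V)" using tutte_even[OF g tu] .
  ultimately have evS: "even (card S) = even (card ?O)" using cardV by auto
  have cS': "card ?S' = card S - card ?O" using \<sigma> finS
    by (simp add: card_Diff_subset card_image finite_subset)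
  have "\<exists>m. pm ?S' E m"
  proof (rule clique_pm)
    show "finite ?S'" using finS by auto
    show "even (card ?S')" using cS' evS cO by auto
    show "\<forall>x\<in>?S'. \<forall>y\<in>?S'. x \<noteq> y \<longrightarrow> E x y" using S by auto
  qed
  then obtain mS where mS: "pm ?S' E mS" by auto
  define \<tau> where "\<tau> = the_inv_into ?O \<sigma>"
  define m where "m v = (if v \<in> S then (if v \<in> \<sigma> ` ?O then r (\<tau> v) else mS v)
     else (if odd (card (comp ?W E v)) \<and> v = r (comp ?W E v) then \<sigma> (comp ?W E v) else mK (comp ?W E v) v))" for v
  have "pm V E m"
    unfolding pm_def
  proof
    fix v assume vV: "v \<in> V"
    show "m v \<in> V \<and> m v \<noteq> v \<and> m (m v) = v \<and> E v (m v)"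
    proof (cases "v \<in> S")
      case True
      show ?thesis
      proof (cases "v \<in> \<sigma> ` ?O")
        case True
        then obtain C where C: "C \<in> ?O" "v = \<sigma> C" by auto
        have tv: "\<tau> v = C" unfolding \<tau>_def using the_inv_into_f_f[OF \<sigma>(2) C(1)] C(2) by simp
        have Cc: "C \<in> components ?W E" using C by auto
        have rCW: "r C \<in> ?W" using rC[OF Cc] components_sub[OF Cc] by auto
        have mv: "m v = r C" unfolding m_def using \<open>v \<in> S\<close> True tv by auto
        have cr: "comp ?W E (r C) = C" using comp_mem_eq[OF sym Cc rC[OF Cc]] by auto
        have "m (r C) = \<sigma> C" unfolding m_def using rCW cr C by auto
        moreover have "E v (r C)"
        proof -
          have "r C \<noteq> v" using rCW \<open>v \<in> S\<close> by auto
          moreover have "\<forall>w\<in>V. w \<noteq> v \<longrightarrow> E v w" using \<open>v \<in> S\<close> S by auto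
          ultimately show ?thesis using rCW by auto
        qed
        moreover have "r C \<noteq> v" using rCW \<open>v \<in> S\<close> by auto
        ultimately show ?thesis using mv rCW C(2) by simp
      next
        case False
        then have "v \<in> ?S'" using \<open>v \<in> S\<close> by auto
        then have h: "mS v \<in> ?S' \<and> mS v \<noteq> v \<and> mS (mS v) = v \<and> E v (mS v)" using mS unfolding pm_def by blast
        have "m v = mS v" unfolding m_def using \<open>v \<in> S\<close> False by auto
        moreover have "m (mS v) = mS (mS v)" unfolding m_def using h by auto
        ultimately show ?thesis using h SV by auto
      qed
    next
      case False
      let ?C = "comp ?W E v"
      have vW: "v \<in> ?W" using vV False by auto
      have Cc: "?C \<in> components ?W E" using vW unfolding components_comp by auto
      show ?thesis
      proof (cases "odd (card ?C) \<and> v = r ?C")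
        case True
        have CO: "?C \<in> ?O" using True Cc by auto
        have mv: "m v = \<sigma> ?C" unfolding m_def using False True by auto
        have sS: "\<sigma> ?C \<in> S" using \<sigma> CO by auto
        have "\<tau> (\<sigma> ?C) = ?C" unfolding \<tau>_def using the_inv_into_f_f[OF \<sigma>(2) CO] by simp
        then have "m (\<sigma> ?C) = v" unfolding m_def using sS CO True by auto
        moreover have "E (\<sigma> ?C) v"
        proof -
          have "\<sigma> ?C \<noteq> v" using sS False by auto
          moreover have "\<forall>w\<in>V. w \<noteq> \<sigma> ?C \<longrightarrow> E (\<sigma> ?C) w" using sS S by auto
          ultimately show ?thesis using vV by auto
        qed
        ultimately show ?thesis using mv sS SV sym False by auto
      next
        case nt: False
        have vK: "v \<in> K ?C" unfolding K_def using nt comp_self[OF vW] by auto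
        have h: "mK ?C v \<in> K ?C \<and> mK ?C v \<noteq> v \<and> mK ?C (mK ?C v) = v \<and> E v (mK ?C v)"
          using mK Cc vK unfolding pm_def by blast
        have mv: "m v = mK ?C v" unfolding m_def using False nt by auto
        let ?u = "mK ?C v"
        have uC: "?u \<in> ?C" using h unfolding K_def by (auto split: if_splits)
        have uW: "?u \<in> ?W" using uC comp_sub[of ?W E v] by blast
        have cu: "comp ?W E ?u = ?C" using comp_eq[OF sym uC] .
        have "\<not> (odd (card ?C) \<and> ?u = r ?C)" using h unfolding K_def by auto
        then have "m ?u = mK ?C ?u" unfolding m_def using uW cu by auto
        then show ?thesis using h mv uW by auto
      qed
    qed
  qed
  then show ?thesis by auto
qed

definition nonedges :: "'a set \<Rightarrow> ('a \<Rightarrow> 'a \<Rightarrow> bool) \<Rightarrow> ('a \<times> 'a) set" where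
  "nonedges V E = {(u, v). u \<in> V \<and> v \<in> V \<and> u \<noteq> v \<and> \<not> E u v}"

lemma graph_add: "graph V E \<Longrightarrow> a \<in> V \<Longrightarrow> c \<in> V \<Longrightarrow> a \<noteq> c \<Longrightarrow> graph V (addE E a c)"
  unfolding graph_def addE_def by auto

theorem tutte_thm: "graph V E \<Longrightarrow> tutte V E \<Longrightarrow> \<exists>m. pm V E m"
proof (induction "card (nonedges V E)" arbitrary: E rule: less_induct)
  case less
  have g: "graph V E" and tu: "tutte V E" using less.prems by auto
  have sym: "\<forall>u v. E u v \<longrightarrow> E v u" and fin: "finite V" and irr: "\<forall>v. \<not> E v v"
    using g unfolding graph_def by auto
  show ?case
  proof (rule ccontr)
    assume nopm: "\<not> (\<exists>m. pm V E m)"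
    have sat: "\<exists>m. pm V (addE E x y) m" if xy: "x \<in> V" "y \<in> V" "x \<noteq> y" "\<not> E x y" for x y
    proof -
      have "nonedges V (addE E x y) \<subseteq> nonedges V E" unfolding nonedges_def addE_def by auto
      moreover have "(x, y) \<in> nonedges V E" "(x, y) \<notin> nonedges V (addE E x y)"
        using xy unfolding nonedges_def addE_def by auto
      moreover have "finite (nonedges V E)" unfolding nonedges_def
        by (rule finite_subset[of _ "V \<times> V"]) (use fin in auto)
      ultimately have "nonedges V (addE E x y) \<subset> nonedges V E" "finite (nonedges V E)" by auto
      then have "card (nonedges V (addE E x y)) < card (nonedges V E)"
        using psubset_card_mono by blast
      then show ?thesis using less.hyps graph_add[OF g xy(1,2,3)] tutte_add[OF g tu] by blast
    qed
    define S where "S = {v\<in>V. \<forall>w\<in>V. w \<noteq> v \<longrightarrow> E v w}"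
    show False
    proof (cases "\<forall>C\<in>components (V - S) E. \<forall>x\<in>C. \<forall>y\<in>C. x \<noteq> y \<longrightarrow> E x y")
      case True
      then show False using case1[OF g tu S_def] nopm by auto
    next
      case False
      then obtain C x y where C: "C \<in> components (V - S) E" "x \<in> C" "y \<in> C" "x \<noteq> y" "\<not> E x y" by auto
      obtain b c where bc: "b \<in> V - S" "c \<in> V - S" "E x b" "E b c" "\<not> E x c" "x \<noteq> c"
        using p3[OF sym C] by auto
      have xV: "x \<in> V" using C components_sub by blast
      obtain d where d: "d \<in> V" "d \<noteq> b" "\<not> E b d" using bc(1) S_def by auto
      obtain m1 where m1: "pm V (addE E x c) m1" using sat[of x c] xV bc by auto
      obtain m2 where m2: "pm V (addE E b d) m2" using sat[of b d] d bc by auto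
      have "\<exists>m. pm V E m" using case2[OF g xV _ _ d(1) bc(3,4,5) d(3) d(2)[symmetric] m1 m2] bc by auto
      then show False using nopm by auto
    qed
  qed
qed

datatype 'a gv = Cp 'a nat | En 'a 'a

definition gV :: "'a set \<Rightarrow> ('a \<Rightarrow> 'a \<Rightarrow> bool) \<Rightarrow> nat \<Rightarrow> 'a gv set" where
  "gV V E k = {Cp v i | v i. v \<in> V \<and> i < k} \<union> {En v w | v w. E v w}"

fun gE :: "('a \<Rightarrow> 'a \<Rightarrow> bool) \<Rightarrow> nat \<Rightarrow> 'a gv \<Rightarrow> 'a gv \<Rightarrow> bool" where
  "gE E k (Cp v i) (En u w) = (u = v \<and> i < k \<and> E v w)"
| "gE E k (En u w) (Cp v i) = (u = v \<and> i < k \<and> E v w)"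
| "gE E k (En u w) (En u' w') = (u' = w \<and> w' = u \<and> E u w)"
| "gE E k (Cp v i) (Cp u j) = False"

fun tgt :: "'a gv \<Rightarrow> 'a" where
  "tgt (En a b) = b"
| "tgt (Cp a i) = a"

lemma gE_sym: "\<forall>u v. E u v \<longrightarrow> E v u \<Longrightarrow> gE E k x y \<Longrightarrow> gE E k y x"
  by (cases x; cases y) auto

lemma g_graph: assumes "graph V E" shows "graph (gV V E k) (gE E k)"
proof -
  have sym: "\<forall>u v. E u v \<longrightarrow> E v u" and fin: "finite V" and irr: "\<forall>v. \<not> E v v"
    and inV: "\<forall>u v. E u v \<longrightarrow> u \<in> V \<and> v \<in> V"
    using assms unfolding graph_def by auto
  have sub: "gV V E k \<subseteq> (\<lambda>(v,i). Cp v i) ` (V \<times> {..<k}) \<union> (\<lambda>(v,w). En v w) ` (V \<times> V)"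
    unfolding gV_def using inV by auto
  have "finite (gV V E k)" by (rule finite_subset[OF sub]) (use fin in auto)
  moreover have "\<forall>x y. gE E k x y \<longrightarrow> x \<in> gV V E k \<and> y \<in> gV V E k"
  proof (intro allI impI)
    fix x y assume "gE E k x y"
    then show "x \<in> gV V E k \<and> y \<in> gV V E k" using inV sym unfolding gV_def
      by (cases x; cases y) auto
  qed
  moreover have "\<forall>x y. gE E k x y \<longrightarrow> gE E k y x" using gE_sym[OF sym] by blast
  moreover have "\<forall>x. \<not> gE E k x x"
  proof
    fix x show "\<not> gE E k x x" using irr by (cases x) auto
  qed
  ultimately show ?thesis unfolding graph_def by blast
qed

lemma g_factor:
  assumes g: "graph V E" and M: "pm (gV V E k) (gE E k) m"
  shows "has_k_factor V E k"
proof -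
  have sym: "\<forall>u v. E u v \<longrightarrow> E v u" and fin: "finite V" and irr: "\<forall>v. \<not> E v v"
    and inV: "\<forall>u v. E u v \<longrightarrow> u \<in> V \<and> v \<in> V"
    using g unfolding graph_def by auto
  have mp: "\<And>y. y \<in> gV V E k \<Longrightarrow> m y \<in> gV V E k \<and> m y \<noteq> y \<and> m (m y) = y \<and> gE E k y (m y)"
    using M unfolding pm_def by auto
  have EnV: "E v w \<Longrightarrow> En v w \<in> gV V E k" for v w unfolding gV_def by auto
  have CpV: "v \<in> V \<Longrightarrow> i < k \<Longrightarrow> Cp v i \<in> gV V E k" for v i unfolding gV_def by auto
  define F where "F v w \<longleftrightarrow> E v w \<and> m (En v w) \<noteq> En w v" for v w
  have Fsym: "F w v" if "F v w" for v w
  proof -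
    have E: "E v w" "E w v" using that sym unfolding F_def by auto
    have "m (En w v) \<noteq> En v w"
    proof
      assume a: "m (En w v) = En v w"
      have "m (m (En w v)) = En w v" using mp[OF EnV[OF E(2)]] by auto
      then have "m (En v w) = En w v" using a by simp
      then show False using that unfolding F_def by auto
    qed
    then show ?thesis using E unfolding F_def by auto
  qed
  have "graph V F" unfolding graph_def using fin inV irr Fsym unfolding F_def by blast
  moreover have "\<forall>u v. F u v \<longrightarrow> E u v" unfolding F_def by auto
  moreover have "degree V F v = k" if vV: "v \<in> V" for v
  proof -
    have mc: "\<exists>w. m (Cp v i) = En v w \<and> E v w" if "i < k" for i
    proof -
      have "gE E k (Cp v i) (m (Cp v i))" using mp[OF CpV[OF vV that]] by auto
      then show ?thesis by (cases "m (Cp v i)") auto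
    qed
    have "bij_betw (\<lambda>i. tgt (m (Cp v i))) {..<k} {u \<in> V. F v u}"
    proof (rule bij_betwI')
      fix i j assume ij: "i \<in> {..<k}" "j \<in> {..<k}"
      obtain w1 where w1: "m (Cp v i) = En v w1" using mc ij by auto
      obtain w2 where w2: "m (Cp v j) = En v w2" using mc ij by auto
      show "(tgt (m (Cp v i)) = tgt (m (Cp v j))) = (i = j)"
      proof
        assume "tgt (m (Cp v i)) = tgt (m (Cp v j))"
        then have "m (Cp v i) = m (Cp v j)" using w1 w2 by simp
        then have "m (m (Cp v i)) = m (m (Cp v j))" by simp
        then show "i = j" using mp[OF CpV[OF vV]] ij by auto
      qed simp
    next
      fix i assume i: "i \<in> {..<k}"
      obtain w where w: "m (Cp v i) = En v w" "E v w" using mc i by auto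
      have "m (En v w) = Cp v i" using mp[OF CpV[OF vV]] i w by force
      then show "tgt (m (Cp v i)) \<in> {u \<in> V. F v u}" using w inV unfolding F_def by auto
    next
      fix u assume u: "u \<in> {u \<in> V. F v u}"
      then have E: "E v u" and ne: "m (En v u) \<noteq> En u v" unfolding F_def by auto
      have "gE E k (En v u) (m (En v u))" using mp[OF EnV[OF E]] by auto
      then obtain i where i: "m (En v u) = Cp v i" "i < k" using ne by (cases "m (En v u)") auto
      then have "m (Cp v i) = En v u" using mp[OF EnV[OF E]] by force
      then show "\<exists>i\<in>{..<k}. u = tgt (m (Cp v i))" using i by force
    qed
    then have "card {u \<in> V. F v u} = k" using bij_betw_same_card by fastforce
    then show ?thesis unfolding degree_def .
  qed
  ultimately show ?thesis unfolding has_k_factor_def by blast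
qed

lemma oddc_insert:
  assumes sym: "\<forall>u v. E u v \<longrightarrow> E v u" and fin: "finite W" and xW: "x \<notin> W"
  and nb: "\<forall>y\<in>W. E x y \<longrightarrow> y \<in> comp W E y1 \<or> y \<in> comp W E y2"
  shows "oddc W E \<le> oddc (insert x W) E + 1"
proof -
  let ?W' = "insert x W"
  let ?A = "{C \<in> components W E. \<exists>y\<in>C. E x y}"
  let ?O = "{C \<in> components W E. odd (card C)}"
  let ?O' = "{C \<in> components ?W' E. odd (card C)}"
  have finO: "finite ?O" using components_finite[OF fin] by auto
  have finW': "finite ?W'" using fin by auto
  have finO': "finite ?O'" using components_finite[OF finW'] by auto
  have Asub: "?A \<subseteq> {comp W E y1, comp W E y2}"
  proof
    fix C assume C: "C \<in> ?A"
    then obtain y where y: "y \<in> C" "E x y" by auto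
    have yW: "y \<in> W" using C y components_sub by blast
    have "C = comp W E y" using comp_mem_eq[OF sym] C y by auto
    moreover have "y \<in> comp W E y1 \<or> y \<in> comp W E y2" using nb yW y by auto
    ultimately show "C \<in> {comp W E y1, comp W E y2}" using comp_eq[OF sym] by auto
  qed
  have c2: "card {comp W E y1, comp W E y2} \<le> 2" by (cases "comp W E y1 = comp W E y2") auto
  have cA: "card ?A \<le> 2" using card_mono[OF _ Asub] c2 by auto
  have finA: "finite ?A" using Asub by (rule finite_subset) auto
  have keep: "C \<in> components ?W' E" if C: "C \<in> components W E" "C \<notin> ?A" for C
  proof -
    obtain v where v: "v \<in> C" using components_ne[OF C(1)] by auto
    show ?thesis
    proof (rule component_char(1)[OF sym _ v])
      show "C \<subseteq> ?W'" using components_sub[OF C(1)] by auto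
      show "closed ?W' E C" unfolding closed_def
      proof (intro allI impI)
        fix z y assume zy: "z \<in> C" "y \<in> ?W'" "E z y"
        show "y \<in> C"
        proof (cases "y = x")
          case True then have "E x z" using zy sym by auto
          then show ?thesis using C zy by auto
        next
          case False then show ?thesis using zy components_closed[OF C(1)] unfolding closed_def by auto
        qed
      qed
      show "\<forall>u\<in>C. (rel ?W' E)\<^sup>*\<^sup>* v u"
        using components_conn[OF sym C(1) v] rel_mono[of C ?W' E E] components_sub[OF C(1)] by blast
    qed
  qed
  have OA: "?O - ?A \<subseteq> ?O'" using keep by auto
  have cO: "card ?O = card (?O - ?A) + card (?O \<inter> ?A)"
    using card_Int_Diff[OF finO, of ?A] by simp
  show ?thesis
  proof (cases "card (?O \<inter> ?A) \<le> 1")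
    case True
    have "card (?O - ?A) \<le> card ?O'" using card_mono[OF finO' OA] .
    then show ?thesis using cO True unfolding oddc_def by linarith
  next
    case False
    have "card (?O \<inter> ?A) \<le> 2" using cA card_mono[OF finA, of "?O \<inter> ?A"] by auto
    then have c2: "card (?O \<inter> ?A) = 2" using False by auto
    then obtain C1 C2 where CC: "?O \<inter> ?A = {C1, C2}" "C1 \<noteq> C2" unfolding card_2_iff by blast
    have C1: "C1 \<in> components W E" "odd (card C1)" "\<exists>y\<in>C1. E x y" using CC by auto
    have C2: "C2 \<in> components W E" "odd (card C2)" "\<exists>y\<in>C2. E x y" using CC by auto
    have disj: "C1 \<inter> C2 = {}" using components_disj[OF sym C1(1) C2(1)] CC(2) by auto
    define K where "K = insert x (C1 \<union> C2)"
    have C1W: "C1 \<subseteq> W" and C2W: "C2 \<subseteq> W" using C1 C2 components_sub by auto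
    have fC1: "finite C1" and fC2: "finite C2" using C1W C2W fin finite_subset by auto
    have "K \<in> components ?W' E"
    proof (rule component_char(1)[OF sym _ _ _ ])
      show "K \<subseteq> ?W'" unfolding K_def using C1W C2W by auto
      show "x \<in> K" unfolding K_def by auto
      show "closed ?W' E K" unfolding closed_def
      proof (intro allI impI)
        fix z y assume zy: "z \<in> K" "y \<in> ?W'" "E z y"
        show "y \<in> K"
        proof (cases "y = x")
          case True then show ?thesis unfolding K_def by auto
        next
          case yx: False
          then have yW: "y \<in> W" using zy by auto
          show ?thesis
          proof (cases "z = x")
            case True
            then have "comp W E y \<in> ?A" using yW zy comp_self[OF yW] unfolding components_comp by auto
            moreover have "?O \<inter> ?A = ?A"
            proof (rule card_subset_eq[OF finA])
              show "?O \<inter> ?A \<subseteq> ?A" by (rule Int_lower2)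
              have "card (?O \<inter> ?A) \<le> card ?A" using card_mono[OF finA Int_lower2] .
              then show "card (?O \<inter> ?A) = card ?A" using cA c2 by linarith
            qed
            ultimately have "comp W E y \<in> {C1, C2}" using CC(1) by simp
            then show ?thesis using comp_self[OF yW] unfolding K_def by auto
          next
            case False
            then have "z \<in> C1 \<or> z \<in> C2" using zy unfolding K_def by auto
            then show ?thesis using components_closed[OF C1(1)] components_closed[OF C2(1)] yW zy
              unfolding closed_def K_def by blast
          qed
        qed
      qed
      show "\<forall>u\<in>K. (rel ?W' E)\<^sup>*\<^sup>* x u"
      proof
        fix u assume u: "u \<in> K"
        have conn: "(rel ?W' E)\<^sup>*\<^sup>* x u" if Ci: "Ci \<in> components W E" "\<exists>y\<in>Ci. E x y" "u \<in> Ci" for Ci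
        proof -
          obtain y where y: "y \<in> Ci" "E x y" using Ci by auto
          have "Ci \<subseteq> W" using Ci components_sub by auto
          then have "rel ?W' E x y" using y unfolding rel_def by auto
          moreover have "(rel ?W' E)\<^sup>*\<^sup>* y u"
            using components_conn[OF sym Ci(1) y(1) Ci(3)] rel_mono[of Ci ?W' E E] \<open>Ci \<subseteq> W\<close> by blast
          ultimately show ?thesis by (meson converse_rtranclp_into_rtranclp)
        qed
        show "(rel ?W' E)\<^sup>*\<^sup>* x u"
        proof (cases "u = x")
          case True then show ?thesis by simp
        next
          case False then have "u \<in> C1 \<or> u \<in> C2" using u unfolding K_def by auto
          then show ?thesis using conn C1 C2 by blast
        qed
      qed
    qed
    moreover have "odd (card K)"
    proof -
      have "x \<notin> C1 \<union> C2" using C1W C2W xW by auto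
      then have "card K = Suc (card C1 + card C2)" unfolding K_def using fC1 fC2 disj
        by (simp add: card_Un_disjoint)
      then show ?thesis using C1 C2 by auto
    qed
    ultimately have KO: "K \<in> ?O'" by auto
    have "K \<notin> ?O - ?A" using xW components_sub unfolding K_def by blast
    then have "insert K (?O - ?A) \<subseteq> ?O'" using KO OA by auto
    then have "card (insert K (?O - ?A)) \<le> card ?O'" using card_mono[OF finO'] by blast
    moreover have "card (insert K (?O - ?A)) = Suc (card (?O - ?A))" using \<open>K \<notin> ?O - ?A\<close> finO by auto
    ultimately show ?thesis using cO c2 unfolding oddc_def by linarith
  qed
qed

lemma canon_count:
  assumes g: "graph V E" and k1: "k \<ge> 1" and md: "\<forall>v\<in>V. degree V E v \<ge> k"
  and ST: "S \<subseteq> V" "T \<subseteq> V" "S \<inter> T = {}"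
  and X: "X = {Cp v i | v i. v \<in> S \<and> i < k} \<union> {En v w | v w. v \<in> T \<and> E v w}"
  shows "oddc (gV V E k - X) (gE E k) \<le> k * card T + edges_between E S T + q V E k S T"
proof -
  have sym: "\<forall>u v. E u v \<longrightarrow> E v u" and fin: "finite V" and irr: "\<forall>v. \<not> E v v"
    and inV: "\<forall>u v. E u v \<longrightarrow> u \<in> V \<and> v \<in> V"
    using g unfolding graph_def by auto
  have gsym: "\<forall>u v. gE E k u v \<longrightarrow> gE E k v u" using gE_sym[OF sym] by blast
  define W where "W = gV V E k - X"
  define R where "R = V - (S \<union> T)"
  have finR: "finite R" using fin unfolding R_def by auto
  have CpW: "Cp v i \<in> W \<longleftrightarrow> v \<in> V \<and> i < k \<and> v \<notin> S" for v i
    unfolding W_def X gV_def by auto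
  have EnW: "En v w \<in> W \<longleftrightarrow> E v w \<and> v \<notin> T" for v w
    unfolding W_def X gV_def by auto
  have finW: "finite W" using graph_def g_graph[OF g, of k] unfolding W_def by auto
  have nbr: "\<exists>w. E v w" if "v \<in> V" for v
  proof -
    have "card {u\<in>V. E v u} \<ge> 1" using md that k1 unfolding degree_def by force
    have "{u\<in>V. E v u} \<noteq> {}"
    proof
      assume "{u\<in>V. E v u} = {}"
      then have "card {u\<in>V. E v u} = 0" by (simp only: card.empty)
      then show False using \<open>card {u\<in>V. E v u} \<ge> 1\<close> by simp
    qed
    then show ?thesis by auto
  qed
  define KQ where "KQ Q = {Cp v i | v i. v \<in> Q \<and> i < k} \<union> {En v w | v w. v \<in> Q \<and> E v w}
      \<union> {En w v | v w. v \<in> Q \<and> w \<in> S \<and> E v w}" for Q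
  have ClaimA: "KQ Q \<in> components W (gE E k)" if Q: "Q \<in> components R E" for Q
  proof -
    have QR: "Q \<subseteq> R" using components_sub[OF Q] .
    obtain v0 where v0: "v0 \<in> Q" using components_ne[OF Q] by auto
    have Qcl: "closed R E Q" using components_closed[OF Q] .
    have QRm: "v \<in> V \<and> v \<notin> S \<and> v \<notin> T" if "v \<in> Q" for v using that QR unfolding R_def by auto
    have sub: "KQ Q \<subseteq> W"
    proof
      fix z assume "z \<in> KQ Q"
      then show "z \<in> W" unfolding KQ_def using QRm CpW EnW ST(3) sym by auto
    qed
    have cl: "closed W (gE E k) (KQ Q)" unfolding closed_def
    proof (intro allI impI)
      fix z y assume zy: "z \<in> KQ Q" "y \<in> W" "gE E k z y"
      show "y \<in> KQ Q"
      proof (cases z)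
        case (Cp v i)
        then have vQ: "v \<in> Q" using zy(1) unfolding KQ_def by auto
        then show ?thesis using zy Cp unfolding KQ_def by (cases y) auto
      next
        case (En v w)
        note zE = En
        show ?thesis
        proof (cases y)
          case (Cp u j)
          then have "u = v" "j < k" "E v w" using zy zE by auto
          moreover have "v \<in> Q"
          proof -
            have "v \<in> Q \<or> (w \<in> Q \<and> v \<in> S)" using zy(1) zE unfolding KQ_def by auto
            moreover have "v \<notin> S" using zy(2) Cp \<open>u = v\<close> CpW by auto
            ultimately show ?thesis by auto
          qed
          ultimately show ?thesis using Cp unfolding KQ_def by auto
        next
          case (En u u')
          then have uu: "u = w" "u' = v" "E v w" using zy zE En by auto
          have "v \<in> Q \<or> (w \<in> Q \<and> v \<in> S)" using zy(1) zE unfolding KQ_def by auto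
          then show ?thesis
          proof
            assume vQ: "v \<in> Q"
            have wV: "w \<in> V" using uu inV by auto
            have "w \<notin> T" using zy(2) En uu EnW by auto
            then have "w \<in> S \<or> w \<in> R" using wV unfolding R_def by auto
            then show ?thesis
            proof
              assume "w \<in> S" then show ?thesis using En uu vQ unfolding KQ_def by auto
            next
              assume "w \<in> R"
              then have "w \<in> Q" using Qcl vQ uu unfolding closed_def by auto
              then show ?thesis using En uu sym unfolding KQ_def by auto
            qed
          next
            assume "w \<in> Q \<and> v \<in> S"
            then show ?thesis using En uu sym unfolding KQ_def by auto
          qed
        qed
      qed
    qed
    have z0: "Cp v0 0 \<in> KQ Q" using v0 k1 unfolding KQ_def by auto
    have lift: "(rel W (gE E k))\<^sup>*\<^sup>* (Cp v0 0) (Cp v 0)" if "v \<in> Q" for v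
    proof -
      have "(rel Q E)\<^sup>*\<^sup>* v0 v" using components_conn[OF sym Q v0 that] .
      then show ?thesis
      proof (induction rule: rtranclp_induct)
        case base then show ?case by simp
      next
        case (step a b)
        have ab: "a \<in> Q" "b \<in> Q" "E a b" using step(2) unfolding rel_def by auto
        have r1: "rel W (gE E k) (Cp a 0) (En a b)" unfolding rel_def
          using ab QRm CpW EnW k1 by auto
        have r2: "rel W (gE E k) (En a b) (En b a)" unfolding rel_def
          using ab QRm EnW sym by auto
        have r3: "rel W (gE E k) (En b a) (Cp b 0)" unfolding rel_def
          using ab QRm CpW EnW k1 sym by auto
        show ?case using step(3) r1 r2 r3 by (meson rtranclp.rtrancl_into_rtrancl)
      qed
    qed
    have conn: "\<forall>u\<in>KQ Q. (rel W (gE E k))\<^sup>*\<^sup>* (Cp v0 0) u"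
    proof
      fix u assume u: "u \<in> KQ Q"
      show "(rel W (gE E k))\<^sup>*\<^sup>* (Cp v0 0) u"
      proof (cases u)
        case (Cp v i)
        then have vQ: "v \<in> Q" and ik: "i < k" using u unfolding KQ_def by auto
        obtain w where w: "E v w" using nbr QRm vQ by blast
        have r1: "rel W (gE E k) (Cp v 0) (En v w)" unfolding rel_def using vQ QRm CpW EnW k1 w by auto
        have r2: "rel W (gE E k) (En v w) (Cp v i)" unfolding rel_def using vQ QRm CpW EnW ik w by auto
        show ?thesis using lift[OF vQ] r1 r2 Cp by (meson rtranclp.rtrancl_into_rtrancl)
      next
        case (En v w)
        then have "(v \<in> Q \<and> E v w) \<or> (w \<in> Q \<and> v \<in> S \<and> E w v)" using u unfolding KQ_def by auto
        then show ?thesis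
        proof
          assume a: "v \<in> Q \<and> E v w"
          have r1: "rel W (gE E k) (Cp v 0) (En v w)" unfolding rel_def using a QRm CpW EnW k1 by auto
          show ?thesis using lift a r1 En by (meson rtranclp.rtrancl_into_rtrancl)
        next
          assume a: "w \<in> Q \<and> v \<in> S \<and> E w v"
          have r1: "rel W (gE E k) (Cp w 0) (En w v)" unfolding rel_def using a QRm CpW EnW k1 by auto
          have r2: "rel W (gE E k) (En w v) (En v w)" unfolding rel_def using a QRm EnW sym ST(3) by auto
          show ?thesis using lift a r1 r2 En by (meson rtranclp.rtrancl_into_rtrancl)
        qed
      qed
    qed
    show ?thesis using component_char(1)[OF gsym sub z0 cl conn] .
  qed
  have ClaimB: "odd (card (KQ Q)) = odd (k * card Q + edges_between E Q T)" if Q: "Q \<in> components R E" for Q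
  proof -
    have QR: "Q \<subseteq> R" using components_sub[OF Q] .
    have QRm: "v \<in> V \<and> v \<notin> S \<and> v \<notin> T" if "v \<in> Q" for v using that QR unfolding R_def by auto
    have finQ: "finite Q" using QR finR finite_subset by auto
    have finS: "finite S" "finite T" using finite_subset[OF ST(1) fin] finite_subset[OF ST(2) fin] by auto
    define P1 where "P1 = (\<lambda>(v,i). Cp v i) ` (Q \<times> {..<k})"
    define P2 where "P2 = (\<lambda>(v,w). En v w) ` pr Q V E"
    define P3 where "P3 = (\<lambda>(v,w). En w v) ` pr Q S E"
    have KQeq: "KQ Q = P1 \<union> P2 \<union> P3" unfolding KQ_def P1_def P2_def P3_def pr_def using inV by auto
    have c1: "card P1 = k * card Q" unfolding P1_def
      by (subst card_image) (auto simp: inj_on_def card_cartesian_product)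
    have c2: "card P2 = card (pr Q V E)" unfolding P2_def
      by (subst card_image) (auto simp: inj_on_def)
    have c3: "card P3 = card (pr Q S E)" unfolding P3_def
      by (subst card_image) (auto simp: inj_on_def)
    have fP: "finite P1" "finite P2" "finite P3" unfolding P1_def P2_def P3_def
      using finQ fin finS pr_finite by auto
    have d12: "P1 \<inter> P2 = {}" "(P1 \<union> P2) \<inter> P3 = {}" unfolding P1_def P2_def P3_def pr_def
      using QRm by auto
    have cK: "card (KQ Q) = k * card Q + card (pr Q V E) + card (pr Q S E)"
      unfolding KQeq using c1 c2 c3 fP d12 by (simp add: card_Un_disjoint)
    have Qcl: "closed R E Q" using components_closed[OF Q] .
    have prV: "pr Q V E = pr Q Q E \<union> pr Q S E \<union> pr Q T E"
    proof
      show "pr Q V E \<subseteq> pr Q Q E \<union> pr Q S E \<union> pr Q T E"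
      proof
        fix p assume p: "p \<in> pr Q V E"
        then obtain v w where vw: "p = (v, w)" "v \<in> Q" "w \<in> V" "E v w" unfolding pr_def by auto
        have "w \<in> Q \<or> w \<in> S \<or> w \<in> T"
        proof (cases "w \<in> R")
          case True then show ?thesis using Qcl vw unfolding closed_def by auto
        next
          case False then show ?thesis using vw unfolding R_def by auto
        qed
        then show "p \<in> pr Q Q E \<union> pr Q S E \<union> pr Q T E" using vw unfolding pr_def by auto
      qed
      show "pr Q Q E \<union> pr Q S E \<union> pr Q T E \<subseteq> pr Q V E" using QR ST unfolding pr_def R_def by auto
    qed
    have dd: "pr Q Q E \<inter> pr Q S E = {}" "(pr Q Q E \<union> pr Q S E) \<inter> pr Q T E = {}"
      using QRm ST(3) unfolding pr_def by auto
    have f1: "finite (pr Q Q E)" "finite (pr Q S E)" "finite (pr Q T E)" using pr_finite finQ finS by auto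
    have u1: "card (pr Q Q E \<union> pr Q S E) = card (pr Q Q E) + card (pr Q S E)"
      by (rule card_Un_disjoint) (use f1 dd in auto)
    have u2: "card (pr Q Q E \<union> pr Q S E \<union> pr Q T E) = card (pr Q Q E \<union> pr Q S E) + card (pr Q T E)"
      by (rule card_Un_disjoint) (use f1 dd in auto)
    have cV: "card (pr Q V E) = card (pr Q Q E) + card (pr Q S E) + card (pr Q T E)"
      unfolding prV using u1 u2 by simp
    have ev: "even (card (pr Q Q E))" using pr_even[OF finQ] sym irr by auto
    show ?thesis unfolding eb_pr using cK cV ev by auto
  qed
  define A1 where "A1 = (\<lambda>(v,i). {Cp v i}) ` (T \<times> {..<k})"
  define A2 where "A2 = (\<lambda>(v,w). {En v w}) ` pr S T E"
  define A3 where "A3 = KQ ` odd_comps V E k S T"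
  have ClaimC: "K \<in> A1 \<union> A2 \<union> A3" if K: "K \<in> components W (gE E k)" "odd (card K)" for K
  proof -
    obtain z where z: "z \<in> K" using components_ne[OF K(1)] by auto
    have zW: "z \<in> W" using z components_sub[OF K(1)] by auto
    have inQ: "K \<in> A3" if vR: "v \<in> R" and zK: "z \<in> KQ (comp R E v)" for v
    proof -
      let ?Q = "comp R E v"
      have Q: "?Q \<in> components R E" using vR unfolding components_comp by auto
      have "K = KQ ?Q" using components_disj[OF gsym K(1) ClaimA[OF Q]] z zK by auto
      then have "odd (k * card ?Q + edges_between E ?Q T)" using ClaimB[OF Q] K(2) by auto
      then have "?Q \<in> odd_comps V E k S T" unfolding odd_comps_def R_def using Q R_def by auto
      then show ?thesis unfolding A3_def using \<open>K = KQ ?Q\<close> by auto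
    qed
    have single: "K = {z}" if cl: "closed W (gE E k) {z}"
    proof -
      have "{z} \<in> components W (gE E k)"
        using component_char(1)[OF gsym _ _ cl] zW by auto
      then show ?thesis using components_disj[OF gsym K(1)] z by auto
    qed
    show ?thesis
    proof (cases z)
      case (Cp v i)
      then have v: "v \<in> V" "i < k" "v \<notin> S" using zW CpW by auto
      show ?thesis
      proof (cases "v \<in> T")
        case True
        have "closed W (gE E k) {z}" unfolding closed_def
        proof (intro allI impI)
          fix a y assume ay: "a \<in> {z}" "y \<in> W" "gE E k a y"
          then show "y \<in> {z}" using Cp True EnW by (cases y) auto
        qed
        then have "K = {Cp v i}" using single Cp by auto
        then show ?thesis unfolding A1_def using True v by auto
      next
        case False
        then have vR: "v \<in> R" using v unfolding R_def by auto
        have "z \<in> KQ (comp R E v)" unfolding KQ_def using Cp v comp_self[OF vR] by auto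
        then show ?thesis using inQ[OF vR] by auto
      qed
    next
      case (En v w)
      then have vw: "E v w" "v \<notin> T" using zW EnW by auto
      have vV: "v \<in> V" "w \<in> V" using vw inV by auto
      show ?thesis
      proof (cases "v \<in> S")
        case False
        then have vR: "v \<in> R" using vV vw unfolding R_def by auto
        have "z \<in> KQ (comp R E v)" unfolding KQ_def using En vw comp_self[OF vR] by auto
        then show ?thesis using inQ[OF vR] by auto
      next
        case vS: True
        show ?thesis
        proof (cases "w \<in> R")
          case True
          have "z \<in> KQ (comp R E w)" unfolding KQ_def using En vw vS sym comp_self[OF True] by auto
          then show ?thesis using inQ[OF True] by auto
        next
          case False
          then have "w \<in> S \<or> w \<in> T" using vV unfolding R_def by auto
          then show ?thesis
          proof
            assume wT: "w \<in> T"
            have "closed W (gE E k) {z}" unfolding closed_def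
            proof (intro allI impI)
              fix a y assume ay: "a \<in> {z}" "y \<in> W" "gE E k a y"
              then show "y \<in> {z}" using En wT vS CpW EnW by (cases y) auto
            qed
            then have "K = {En v w}" using single En by auto
            then show ?thesis unfolding A2_def pr_def using vS wT vw by auto
          next
            assume wS: "w \<in> S"
            let ?K = "{En v w, En w v}"
            have "?K \<in> components W (gE E k)"
            proof (rule component_char(1)[OF gsym])
              show "?K \<subseteq> W" using EnW vw sym wS ST(3) by auto
              show "En v w \<in> ?K" by simp
              show "closed W (gE E k) ?K" unfolding closed_def
              proof (intro allI impI)
                fix a y assume ay: "a \<in> ?K" "y \<in> W" "gE E k a y"
                then show "y \<in> ?K" using vS wS CpW by (cases y) auto
              qed
              show "\<forall>u\<in>?K. (rel W (gE E k))\<^sup>*\<^sup>* (En v w) u"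
              proof -
                have "rel W (gE E k) (En v w) (En w v)" unfolding rel_def using EnW vw sym wS ST(3) by auto
                then show ?thesis by auto
              qed
            qed
            then have "K = ?K" using components_disj[OF gsym K(1)] z En by auto
            moreover have "v \<noteq> w" using vw irr by auto
            ultimately have "card K = 2" by auto
            then show ?thesis using K(2) by auto
          qed
        qed
      qed
    qed
  qed
  have finS: "finite S" "finite T" using finite_subset[OF ST(1) fin] finite_subset[OF ST(2) fin] by auto
  have finOC: "finite (odd_comps V E k S T)" unfolding odd_comps_def
    using components_finite[of "V - (S \<union> T)" E] fin by auto
  have fA: "finite A1" "finite A2" "finite A3" unfolding A1_def A2_def A3_def
    using finS pr_finite finOC by auto
  have "{K \<in> components W (gE E k). odd (card K)} \<subseteq> A1 \<union> A2 \<union> A3" using ClaimC by auto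
  then have "oddc W (gE E k) \<le> card (A1 \<union> A2 \<union> A3)" unfolding oddc_def using fA
    by (simp add: card_mono)
  also have "\<dots> \<le> card A1 + card A2 + card A3" by (meson card_Un_le add_le_mono le_refl order_trans)
  also have "\<dots> \<le> k * card T + edges_between E S T + q V E k S T"
  proof -
    have "card A1 \<le> card (T \<times> {..<k})" unfolding A1_def by (rule card_image_le) (use finS in auto)
    moreover have "card A2 \<le> card (pr S T E)" unfolding A2_def by (rule card_image_le) (use finS pr_finite in auto)
    moreover have "card A3 \<le> card (odd_comps V E k S T)" unfolding A3_def by (rule card_image_le) (use finOC in auto)
    ultimately show ?thesis unfolding eb_pr q_def by (simp add: card_cartesian_product mult.commute)
  qed
  finally show ?thesis unfolding W_def .
qed

lemma canon_card:
  assumes g: "graph V E" and ST: "S \<subseteq> V" "T \<subseteq> V"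
  shows "card ({Cp v i | v i. v \<in> S \<and> i < k} \<union> {En v w | v w. v \<in> T \<and> E v w})
     = k * card S + (\<Sum>v\<in>T. degree V E v)"
proof -
  have fin: "finite V" and inV: "\<forall>u v. E u v \<longrightarrow> u \<in> V \<and> v \<in> V" using g unfolding graph_def by auto
  have finS: "finite S" "finite T" using finite_subset[OF ST(1) fin] finite_subset[OF ST(2) fin] by auto
  have e1: "{Cp v i | v i. v \<in> S \<and> i < k} = (\<lambda>(v,i). Cp v i) ` (S \<times> {..<k})" by auto
  have e2: "{En v w | v w. v \<in> T \<and> E v w} = (\<lambda>(v,w). En v w) ` pr T V E" unfolding pr_def using inV by auto
  have c1: "card ((\<lambda>(v,i). Cp v i) ` (S \<times> {..<k})) = k * card S"
    by (subst card_image) (auto simp: inj_on_def card_cartesian_product)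
  have c2: "card ((\<lambda>(v,w). En v w) ` pr T V E) = card (pr T V E)"
    by (subst card_image) (auto simp: inj_on_def)
  have c3: "card (pr T V E) = (\<Sum>v\<in>T. degree V E v)" unfolding degree_def
    using card_pr_sum[OF finS(2) fin] .
  have "card ((\<lambda>(v,i). Cp v i) ` (S \<times> {..<k}) \<union> (\<lambda>(v,w). En v w) ` pr T V E)
      = card ((\<lambda>(v,i). Cp v i) ` (S \<times> {..<k})) + card ((\<lambda>(v,w). En v w) ` pr T V E)"
    by (rule card_Un_disjoint) (use finS fin pr_finite in auto)
  then show ?thesis unfolding e1 e2 using c1 c2 c3 by simp
qed

lemma sum_high:
  assumes fin: "finite V" and T: "T \<subseteq> V" and md: "\<forall>v\<in>V. degree V E v \<ge> k"
  shows "(\<Sum>v\<in>T \<inter> high V E k. degree V E v - k) + k * card T = (\<Sum>v\<in>T. degree V E v)"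
proof -
  have finT: "finite T" using finite_subset[OF T fin] .
  have "(\<Sum>v\<in>T \<inter> high V E k. degree V E v - k) = (\<Sum>v\<in>T. degree V E v - k)"
  proof (rule sum.mono_neutral_left[OF finT])
    show "T \<inter> high V E k \<subseteq> T" by auto
    show "\<forall>i\<in>T - T \<inter> high V E k. degree V E i - k = 0" using T unfolding high_def by auto
  qed
  moreover have "(\<Sum>v\<in>T. degree V E v - k) + k * card T = (\<Sum>v\<in>T. degree V E v - k + k)"
    by (simp add: sum.distrib mult.commute)
  moreover have "(\<Sum>v\<in>T. degree V E v - k + k) = (\<Sum>v\<in>T. degree V E v)"
    by (rule sum.cong) (use T md in auto)
  ultimately show ?thesis by simp
qed

lemma gadget_tutte:
  assumes g: "graph V E" and k1: "k \<ge> 1" and md: "\<forall>v\<in>V. degree V E v \<ge> k"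
  and FC: "\<forall>S T. S \<subseteq> V \<longrightarrow> T \<subseteq> V \<longrightarrow> S \<inter> T = {} \<longrightarrow>
       q V E k S T + edges_between E S T \<le> k * card S + (\<Sum>v \<in> T \<inter> high V E k. degree V E v - k)"
  shows "tutte (gV V E k) (gE E k)"
proof -
  have sym: "\<forall>u v. E u v \<longrightarrow> E v u" and fin: "finite V" and irr: "\<forall>v. \<not> E v v"
    and inV: "\<forall>u v. E u v \<longrightarrow> u \<in> V \<and> v \<in> V"
    using g unfolding graph_def by auto
  let ?GV = "gV V E k" and ?GE = "gE E k"
  have gg: "graph ?GV ?GE" using g_graph[OF g] .
  have gsym: "\<forall>u v. ?GE u v \<longrightarrow> ?GE v u" and finGV: "finite ?GV" using gg unfolding graph_def by auto
  have CpV: "Cp v i \<in> ?GV \<longleftrightarrow> v \<in> V \<and> i < k" for v i unfolding gV_def by auto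
  have EnV: "En v w \<in> ?GV \<longleftrightarrow> E v w" for v w unfolding gV_def by auto
  have main: "\<forall>X. X \<subseteq> ?GV \<longrightarrow> card X = n \<longrightarrow> oddc (?GV - X) ?GE \<le> card X" for n
  proof (induction n rule: less_induct)
    case (less n)
    show ?case
    proof (intro allI impI)
      fix X assume X: "X \<subseteq> ?GV" "card X = n"
      let ?W = "?GV - X"
      have finX: "finite X" using finite_subset[OF X(1) finGV] .
      have rem: "oddc ?W ?GE \<le> card X"
        if x: "x \<in> X" and nb: "\<forall>y\<in>?W. ?GE x y \<longrightarrow> y \<in> comp ?W ?GE y1 \<or> y \<in> comp ?W ?GE y2" for x y1 y2
      proof -
        let ?X' = "X - {x}"
        have cX': "card ?X' = card X - 1" using x finX by auto
        have "card X \<ge> 1" using x finX by (metis One_nat_def Suc_leI card_gt_0_iff empty_iff)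
        then have "card ?X' < n" using cX' X(2) by auto
        then have IH: "oddc (?GV - ?X') ?GE \<le> card ?X'" using less.IH X(1) by blast
        have eq: "?GV - ?X' = insert x ?W" using x X(1) by auto
        have "oddc ?W ?GE \<le> oddc (insert x ?W) ?GE + 1"
          by (rule oddc_insert[OF gsym _ _ nb]) (use finGV x in auto)
        then show ?thesis using IH eq cX' \<open>card X \<ge> 1\<close> by auto
      qed
      show "oddc ?W ?GE \<le> card X"
      proof (cases "\<exists>v i j. v \<in> V \<and> i < k \<and> j < k \<and> Cp v i \<in> X \<and> Cp v j \<notin> X")
        case True
        then obtain v i j where vij: "v \<in> V" "i < k" "j < k" "Cp v i \<in> X" "Cp v j \<notin> X" by auto
        show ?thesis
        proof (rule rem[OF vij(4), of "Cp v j" "Cp v j"], intro ballI impI)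
          fix y assume y: "y \<in> ?W" "?GE (Cp v i) y"
          then obtain w where w: "y = En v w" "E v w" by (cases y) auto
          have "rel ?W ?GE (Cp v j) y" unfolding rel_def using y vij w CpV by auto
          then show "y \<in> comp ?W ?GE (Cp v j) \<or> y \<in> comp ?W ?GE (Cp v j)"
            unfolding comp_def using y by auto
        qed
      next
        case nm1: False
        show ?thesis
        proof (cases "\<exists>v w. En v w \<in> X \<and> Cp v 0 \<in> X")
          case True
          then obtain v w where vw: "En v w \<in> X" "Cp v 0 \<in> X" by auto
          have Evw: "E v w" using vw X(1) EnV by auto
          have vV: "v \<in> V" using Evw inV by auto
          have allC: "Cp v i \<in> X" if ik: "i < k" for i
          proof (rule ccontr)
            assume "Cp v i \<notin> X"
            then have "v \<in> V \<and> 0 < k \<and> i < k \<and> Cp v 0 \<in> X \<and> Cp v i \<notin> X" using vV k1 ik vw by auto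
            then show False using nm1 by blast
          qed
          show ?thesis
          proof (rule rem[OF vw(1), of "En w v" "En w v"], intro ballI impI)
            fix y assume y: "y \<in> ?W" "?GE (En v w) y"
            then have "y = En w v" using allC by (cases y) auto
            then show "y \<in> comp ?W ?GE (En w v) \<or> y \<in> comp ?W ?GE (En w v)"
              using comp_self[OF y(1), of ?GE] by simp
          qed
        next
          case nm2: False
          show ?thesis
          proof (cases "\<exists>v w w'. En v w \<in> X \<and> E v w' \<and> En v w' \<notin> X")
            case True
            then obtain v w w' where vw: "En v w \<in> X" "E v w'" "En v w' \<notin> X" by auto
            have Evw: "E v w" using vw X(1) EnV by auto
            have vV: "v \<in> V" using Evw inV by auto
            have c0: "Cp v 0 \<notin> X" using nm2 vw(1) by blast
            have noC: "Cp v i \<notin> X" if ik: "i < k" for i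
            proof
              assume "Cp v i \<in> X"
              then have "v \<in> V \<and> i < k \<and> 0 < k \<and> Cp v i \<in> X \<and> Cp v 0 \<notin> X" using vV k1 ik c0 by auto
              then show False using nm1 by blast
            qed
            show ?thesis
            proof (rule rem[OF vw(1), of "En v w'" "En w v"], intro ballI impI)
              fix y assume y: "y \<in> ?W" "?GE (En v w) y"
              show "y \<in> comp ?W ?GE (En v w') \<or> y \<in> comp ?W ?GE (En w v)"
              proof (cases y)
                case (Cp u i)
                then have ui: "u = v" "i < k" using y by auto
                have "rel ?W ?GE (En v w') y" unfolding rel_def using y vw Cp ui EnV by auto
                then show ?thesis unfolding comp_def using y by auto
              next
                case (En u u')
                then have "y = En w v" using y by auto
                then show ?thesis using comp_self[OF y(1), of ?GE] by simp
              qed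
            qed
          next
            case nm3: False
            define S where "S = {v\<in>V. Cp v 0 \<in> X}"
            define T where "T = {v\<in>V. Cp v 0 \<notin> X \<and> (\<forall>w. E v w \<longrightarrow> En v w \<in> X)}"
            have ST: "S \<subseteq> V" "T \<subseteq> V" "S \<inter> T = {}" unfolding S_def T_def by auto
            have Xeq: "X = {Cp v i | v i. v \<in> S \<and> i < k} \<union> {En v w | v w. v \<in> T \<and> E v w}"
            proof
              show "X \<subseteq> {Cp v i | v i. v \<in> S \<and> i < k} \<union> {En v w | v w. v \<in> T \<and> E v w}"
              proof
                fix z assume z: "z \<in> X"
                show "z \<in> {Cp v i | v i. v \<in> S \<and> i < k} \<union> {En v w | v w. v \<in> T \<and> E v w}"
                proof (cases z)
                  case (Cp v i)
                  then have "v \<in> V" "i < k" using z X(1) CpV by auto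
                  have "Cp v 0 \<in> X"
                  proof (rule ccontr)
                    assume "Cp v 0 \<notin> X"
                    then have "v \<in> V \<and> i < k \<and> 0 < k \<and> Cp v i \<in> X \<and> Cp v 0 \<notin> X"
                      using \<open>v \<in> V\<close> \<open>i < k\<close> k1 z Cp by auto
                    then show False using nm1 by blast
                  qed
                  then show ?thesis using Cp \<open>v \<in> V\<close> \<open>i < k\<close> unfolding S_def by auto
                next
                  case (En v w)
                  then have Evw: "E v w" using z X(1) EnV by auto
                  have "Cp v 0 \<notin> X" using nm2 z En by blast
                  moreover have "\<forall>w'. E v w' \<longrightarrow> En v w' \<in> X" using nm3 z En by blast
                  ultimately have "v \<in> T" unfolding T_def using Evw inV by auto
                  then show ?thesis using En Evw by auto
                qed
              qed
              show "{Cp v i | v i. v \<in> S \<and> i < k} \<union> {En v w | v w. v \<in> T \<and> E v w} \<subseteq> X"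
              proof
                fix z assume z: "z \<in> {Cp v i | v i. v \<in> S \<and> i < k} \<union> {En v w | v w. v \<in> T \<and> E v w}"
                then show "z \<in> X"
                proof
                  assume "z \<in> {Cp v i | v i. v \<in> S \<and> i < k}"
                  then obtain v i where vi: "z = Cp v i" "v \<in> S" "i < k" by auto
                  have "Cp v 0 \<in> X" "v \<in> V" using vi unfolding S_def by auto
                  show "z \<in> X"
                  proof (rule ccontr)
                    assume "z \<notin> X"
                    then have "v \<in> V \<and> 0 < k \<and> i < k \<and> Cp v 0 \<in> X \<and> Cp v i \<notin> X"
                      using vi \<open>Cp v 0 \<in> X\<close> \<open>v \<in> V\<close> k1 by auto
                    then show False using nm1 by blast
                  qed
                next
                  assume "z \<in> {En v w | v w. v \<in> T \<and> E v w}"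
                  then show "z \<in> X" unfolding T_def by auto
                qed
              qed
            qed
            have "oddc ?W ?GE \<le> k * card T + edges_between E S T + q V E k S T"
              using canon_count[OF g k1 md ST Xeq] .
            also have "\<dots> \<le> k * card T + k * card S + (\<Sum>v \<in> T \<inter> high V E k. degree V E v - k)"
            proof -
              have "q V E k S T + edges_between E S T \<le> k * card S + (\<Sum>v \<in> T \<inter> high V E k. degree V E v - k)"
                using FC ST by blast
              then show ?thesis by linarith
            qed
            also have "\<dots> = k * card S + (\<Sum>v\<in>T. degree V E v)"
              using sum_high[OF fin ST(2) md] by simp
            also have "\<dots> = card X" unfolding Xeq using canon_card[OF g ST(1,2)] by simp
            finally show ?thesis .
          qed
        qed
      qed
    qed
  qed
  show ?thesis unfolding tutte_def using main by blast
qed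

theorem suff:
  assumes g: "graph V E" and k1: "k \<ge> 1" and md: "\<forall>v\<in>V. degree V E v \<ge> k"
  and FC: "\<forall>S T. S \<subseteq> V \<longrightarrow> T \<subseteq> V \<longrightarrow> S \<inter> T = {} \<longrightarrow>
       q V E k S T + edges_between E S T \<le> k * card S + (\<Sum>v \<in> T \<inter> high V E k. degree V E v - k)"
  shows "has_k_factor V E k"
proof -
  obtain m where "pm (gV V E k) (gE E k) m"
    using tutte_thm[OF g_graph[OF g] gadget_tutte[OF g k1 md FC]] by auto
  then show ?thesis using g_factor[OF g] by auto
qed

lemma pr_swap_sym: "\<forall>u v. P u v \<longrightarrow> P v u \<Longrightarrow> card (pr A B P) = card (pr B A P)"
proof -
  assume s: "\<forall>u v. P u v \<longrightarrow> P v u"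
  have "(\<lambda>x y. P y x) = P" using s by (intro ext) auto
  then show ?thesis using card_pr_swap[of A B P] by simp
qed

lemma pr_single_r: "card (pr A {v} P) = card {u\<in>A. P u v}"
proof -
  have "pr A {v} P = (\<lambda>u. (u, v)) ` {u\<in>A. P u v}" unfolding pr_def by auto
  moreover have "inj_on (\<lambda>u. (u, v)) {u\<in>A. P u v}" by (auto simp: inj_on_def)
  ultimately show ?thesis by (simp add: card_image)
qed

lemma pr_single_l: "card (pr {v} A P) = card {u\<in>A. P v u}"
proof -
  have "pr {v} A P = (\<lambda>u. (v, u)) ` {u\<in>A. P v u}" unfolding pr_def by auto
  moreover have "inj_on (\<lambda>u. (v, u)) {u\<in>A. P v u}" by (auto simp: inj_on_def)
  ultimately show ?thesis by (simp add: card_image)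
qed

lemma pr_Un_r: "finite A \<Longrightarrow> finite B \<Longrightarrow> finite C \<Longrightarrow> B \<inter> C = {} \<Longrightarrow>
  card (pr A (B \<union> C) P) = card (pr A B P) + card (pr A C P)"
proof -
  assume f: "finite A" "finite B" "finite C" "B \<inter> C = {}"
  have eq: "pr A (B \<union> C) P = pr A B P \<union> pr A C P" unfolding pr_def by auto
  have di: "pr A B P \<inter> pr A C P = {}" using f unfolding pr_def by auto
  show ?thesis unfolding eq using card_Un_disjoint[OF pr_finite[OF f(1,2)] pr_finite[OF f(1,3)] di] .
qed

lemma pr_Un_l: "finite A \<Longrightarrow> finite B \<Longrightarrow> finite C \<Longrightarrow> A \<inter> B = {} \<Longrightarrow>
  card (pr (A \<union> B) C P) = card (pr A C P) + card (pr B C P)"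
proof -
  assume f: "finite A" "finite B" "finite C" "A \<inter> B = {}"
  have eq: "pr (A \<union> B) C P = pr A C P \<union> pr B C P" unfolding pr_def by auto
  have di: "pr A C P \<inter> pr B C P = {}" using f unfolding pr_def by auto
  show ?thesis unfolding eq using card_Un_disjoint[OF pr_finite[OF f(1,3)] pr_finite[OF f(2,3)] di] .
qed

lemma pr_split_P: "finite A \<Longrightarrow> finite B \<Longrightarrow>
  card (pr A B P) = card (pr A B (\<lambda>x y. P x y \<and> F x y)) + card (pr A B (\<lambda>x y. P x y \<and> \<not> F x y))"
proof -
  assume f: "finite A" "finite B"
  have eq: "pr A B P = pr A B (\<lambda>x y. P x y \<and> F x y) \<union> pr A B (\<lambda>x y. P x y \<and> \<not> F x y)" unfolding pr_def by auto
  have di: "pr A B (\<lambda>x y. P x y \<and> F x y) \<inter> pr A B (\<lambda>x y. P x y \<and> \<not> F x y) = {}" unfolding pr_def by auto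
  show ?thesis apply (subst eq) using card_Un_disjoint[OF pr_finite[OF f] pr_finite[OF f] di] .
qed

lemma nbr_split:
  assumes fin: "finite V" and ST: "S \<subseteq> V" "T \<subseteq> V" "S \<inter> T = {}"
  and Q: "Q \<in> components (V - (S \<union> T)) E" and FE: "\<forall>x y. F x y \<longrightarrow> E x y"
  shows "card (pr Q V F) = card (pr Q Q F) + card (pr Q S F) + card (pr Q T F)"
proof -
  let ?R = "V - (S \<union> T)"
  have QR: "Q \<subseteq> ?R" using components_sub[OF Q] .
  have finQ: "finite Q" using QR fin finite_subset by auto
  have finS: "finite S" "finite T" using finite_subset[OF ST(1) fin] finite_subset[OF ST(2) fin] by auto
  have Qcl: "closed ?R E Q" using components_closed[OF Q] .
  have prV: "pr Q V F = pr Q (Q \<union> S \<union> T) F"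
  proof
    show "pr Q V F \<subseteq> pr Q (Q \<union> S \<union> T) F"
    proof
      fix p assume p: "p \<in> pr Q V F"
      then obtain v w where vw: "p = (v, w)" "v \<in> Q" "w \<in> V" "F v w" unfolding pr_def by auto
      have "w \<in> Q \<or> w \<in> S \<or> w \<in> T"
      proof (cases "w \<in> ?R")
        case True then show ?thesis using Qcl vw FE unfolding closed_def by auto
      next
        case False then show ?thesis using vw by auto
      qed
      then show "p \<in> pr Q (Q \<union> S \<union> T) F" using vw unfolding pr_def by auto
    qed
    show "pr Q (Q \<union> S \<union> T) F \<subseteq> pr Q V F" using QR ST unfolding pr_def by auto
  qed
  have d1: "Q \<inter> S = {}" "(Q \<union> S) \<inter> T = {}" using QR ST by auto
  show ?thesis unfolding prV using pr_Un_r[of Q "Q \<union> S" T F] pr_Un_r[of Q Q S F] d1 finQ finS by simp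
qed

lemma comps_remove:
  assumes sym: "\<forall>u v. E u v \<longrightarrow> E v u" and Q: "Q \<in> components W E"
  shows "components (W - Q) E = components W E - {Q}"
proof
  show "components W E - {Q} \<subseteq> components (W - Q) E"
  proof
    fix C assume C: "C \<in> components W E - {Q}"
    then have C1: "C \<in> components W E" "C \<noteq> Q" by auto
    have disj: "C \<inter> Q = {}" using components_disj[OF sym C1(1) Q] C1(2) by auto
    obtain v where v: "v \<in> C" using components_ne[OF C1(1)] by auto
    show "C \<in> components (W - Q) E"
    proof (rule component_char(1)[OF sym _ v])
      show "C \<subseteq> W - Q" using components_sub[OF C1(1)] disj by auto
      show "closed (W - Q) E C" using components_closed[OF C1(1)] unfolding closed_def by auto
      show "\<forall>u\<in>C. (rel (W - Q) E)\<^sup>*\<^sup>* v u"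
        using components_conn[OF sym C1(1) v] rel_mono[of C "W - Q" E E] components_sub[OF C1(1)] disj
        by blast
    qed
  qed
  show "components (W - Q) E \<subseteq> components W E - {Q}"
  proof
    fix C assume C: "C \<in> components (W - Q) E"
    obtain x where x: "x \<in> C" using components_ne[OF C] by auto
    have xW: "x \<in> W" "x \<notin> Q" using x components_sub[OF C] by auto
    let ?D = "comp W E x"
    have D: "?D \<in> components W E" using xW unfolding components_comp by auto
    have "?D \<noteq> Q" using comp_self[OF xW(1)] xW(2) by auto
    then have "?D \<in> components (W - Q) E" using \<open>components W E - {Q} \<subseteq> components (W - Q) E\<close> D by auto
    then have "C = ?D" using components_disj[OF sym C] x comp_self[OF xW(1)] by auto
    then show "C \<in> components W E - {Q}" using D \<open>?D \<noteq> Q\<close> by auto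
  qed
qed

lemma sum_high_eq:
  assumes fin: "finite V" and T: "T \<subseteq> V"
  shows "(\<Sum>v\<in>T \<inter> high V E k. degree V E v - k) = (\<Sum>v\<in>T. degree V E v - k)"
proof (rule sum.mono_neutral_left)
  show "finite T" using finite_subset[OF T fin] .
  show "T \<inter> high V E k \<subseteq> T" by auto
  show "\<forall>i\<in>T - T \<inter> high V E k. degree V E i - k = 0" using T unfolding high_def by auto
qed

lemma nec:
  assumes g: "graph V E" and FE: "\<forall>u v. F u v \<longrightarrow> E u v" and gF: "graph V F"
  and dF: "\<forall>v\<in>V. degree V F v = k"
  and ST: "S \<subseteq> V" "T \<subseteq> V" "S \<inter> T = {}"
  shows "q V E k S T + edges_between E S T \<le> k * card S + (\<Sum>v\<in>T \<inter> high V E k. degree V E v - k)"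
proof -
  have sym: "\<forall>u v. E u v \<longrightarrow> E v u" and fin: "finite V" and irr: "\<forall>v. \<not> E v v"
    using g unfolding graph_def by auto
  have symF: "\<forall>u v. F u v \<longrightarrow> F v u" and irrF: "\<forall>v. \<not> F v v" using gF unfolding graph_def by auto
  let ?D = "\<lambda>x y. E x y \<and> \<not> F x y"
  have symD: "\<forall>u v. ?D u v \<longrightarrow> ?D v u" using sym symF by blast
  have EF: "(\<lambda>x y. E x y \<and> F x y) = F" using FE by (intro ext) auto
  define R where "R = V - (S \<union> T)"
  have finR: "finite R" using fin unfolding R_def by auto
  have finS: "finite S" "finite T" using finite_subset[OF ST(1) fin] finite_subset[OF ST(2) fin] by auto
  let ?O = "odd_comps V E k S T"
  have key1: "pr Q S F \<union> pr Q T ?D \<noteq> {}" if QO: "Q \<in> ?O" for Q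
  proof -
    have Q: "Q \<in> components R E" and odd: "odd (k * card Q + edges_between E Q T)"
      using QO unfolding odd_comps_def R_def by auto
    have QR: "Q \<subseteq> R" using components_sub[OF Q] .
    have QV: "Q \<subseteq> V" using QR unfolding R_def by auto
    have finQ: "finite Q" using QR finR finite_subset by auto
    have "card (pr Q V F) = (\<Sum>v\<in>Q. card {b\<in>V. F v b})" using card_pr_sum[OF finQ fin] .
    also have "\<dots> = (\<Sum>v\<in>Q. k)" using dF QV unfolding degree_def by (intro sum.cong) auto
    finally have c1: "card (pr Q V F) = k * card Q" by simp
    have c2: "card (pr Q V F) = card (pr Q Q F) + card (pr Q S F) + card (pr Q T F)"
      using nbr_split[OF fin ST _ FE] Q unfolding R_def by auto
    have ev: "even (card (pr Q Q F))" using pr_even[OF finQ] symF irrF by auto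
    have c3: "edges_between E Q T = card (pr Q T F) + card (pr Q T ?D)"
      unfolding eb_pr using pr_split_P[OF finQ finS(2), of E F] EF by simp
    have sm: "k * card Q + edges_between E Q T = card (pr Q Q F) + (card (pr Q S F) + card (pr Q T ?D)) + 2 * card (pr Q T F)"
      using c1 c2 c3 by simp
    obtain a where a: "card (pr Q Q F) = 2 * a" using ev by (auto elim: evenE)
    have od: "odd (card (pr Q S F) + card (pr Q T ?D))"
    proof -
      have "odd (2 * a + (card (pr Q S F) + card (pr Q T ?D)) + 2 * card (pr Q T F))"
        using odd sm a by simp
      then show ?thesis by presburger
    qed
    show ?thesis
    proof
      assume "pr Q S F \<union> pr Q T ?D = {}"
      then have "pr Q S F = {}" "pr Q T ?D = {}" by auto
      then show False using od by simp
    qed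
  qed
  have key1': "\<forall>Q\<in>?O. \<exists>p. p \<in> pr Q S F \<union> pr Q T ?D" using key1 by blast
  obtain p where p: "\<forall>Q\<in>?O. p Q \<in> pr Q S F \<union> pr Q T ?D" using bchoice[OF key1'] by blast
  have Ocomp: "Q \<in> components R E" if "Q \<in> ?O" for Q using that unfolding odd_comps_def R_def by auto
  have pfst: "fst (p Q) \<in> Q" if "Q \<in> ?O" for Q using p that unfolding pr_def by auto
  have "inj_on p ?O"
  proof (rule inj_onI)
    fix Q1 Q2 assume a: "Q1 \<in> ?O" "Q2 \<in> ?O" "p Q1 = p Q2"
    have "fst (p Q1) \<in> Q1" using pfst a(1) by blast
    moreover have "fst (p Q1) \<in> Q2" using pfst[OF a(2)] a(3) by simp
    ultimately have "fst (p Q1) \<in> Q1 \<inter> Q2" by blast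
    then have "Q1 \<inter> Q2 \<noteq> {}" by blast
    then show "Q1 = Q2" using components_disj[OF sym Ocomp[OF a(1)] Ocomp[OF a(2)]] by auto
  qed
  moreover have "p ` ?O \<subseteq> pr R S F \<union> pr R T ?D"
    using p Ocomp components_sub unfolding pr_def by fastforce
  moreover have "finite (pr R S F \<union> pr R T ?D)" using pr_finite finR finS by auto
  ultimately have "card ?O \<le> card (pr R S F \<union> pr R T ?D)" using card_inj_on_le by blast
  also have "\<dots> \<le> card (pr R S F) + card (pr R T ?D)" by (rule card_Un_le)
  finally have kq: "q V E k S T \<le> card (pr S R F) + card (pr T R ?D)"
    unfolding q_def using pr_swap_sym[OF symF, of R S] pr_swap_sym[OF symD, of R T] by simp
  have RT: "R \<inter> T = {}" "R \<inter> S = {}" unfolding R_def by auto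
  have key3: "card (pr S R F) + card (pr S T F) \<le> k * card S"
  proof -
    have "card (pr S V F) = (\<Sum>v\<in>S. card {b\<in>V. F v b})" using card_pr_sum[OF finS(1) fin] .
    also have "\<dots> = (\<Sum>v\<in>S. k)" using dF ST unfolding degree_def by (intro sum.cong) auto
    finally have c1: "card (pr S V F) = k * card S" by simp
    have "card (pr S (R \<union> T) F) = card (pr S R F) + card (pr S T F)" using pr_Un_r finS finR RT by auto
    moreover have "card (pr S (R \<union> T) F) \<le> card (pr S V F)"
      by (rule card_mono) (use pr_finite finS fin R_def ST in \<open>auto simp: pr_def\<close>)
    ultimately show ?thesis using c1 by simp
  qed
  have key4: "card (pr T R ?D) + card (pr T S ?D) \<le> (\<Sum>v\<in>T. degree V E v - k)"
  proof -
    have "card (pr T V ?D) = (\<Sum>v\<in>T. card {b\<in>V. ?D v b})" using card_pr_sum[OF finS(2) fin] .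
    also have "\<dots> = (\<Sum>v\<in>T. degree V E v - k)"
    proof (rule sum.cong)
      fix v assume v: "v \<in> T"
      have "{b\<in>V. E v b} = {b\<in>V. F v b} \<union> {b\<in>V. ?D v b}" using FE by auto
      moreover have "{b\<in>V. F v b} \<inter> {b\<in>V. ?D v b} = {}" by auto
      ultimately have "card {b\<in>V. E v b} = card {b\<in>V. F v b} + card {b\<in>V. ?D v b}"
        using fin by (simp add: card_Un_disjoint)
      then show "card {b\<in>V. ?D v b} = degree V E v - k" using dF v ST unfolding degree_def by auto
    qed simp
    finally have c1: "card (pr T V ?D) = (\<Sum>v\<in>T. degree V E v - k)" .
    have "card (pr T (R \<union> S) ?D) = card (pr T R ?D) + card (pr T S ?D)" using pr_Un_r finS finR RT by auto
    moreover have "card (pr T (R \<union> S) ?D) \<le> card (pr T V ?D)"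
      by (rule card_mono) (use pr_finite finS fin R_def ST in \<open>auto simp: pr_def\<close>)
    ultimately show ?thesis using c1 by simp
  qed
  have ke: "edges_between E S T = card (pr S T F) + card (pr T S ?D)"
    unfolding eb_pr using pr_split_P[OF finS, of E F] EF pr_swap_sym[OF symD, of S T] by simp
  show ?thesis using kq key3 key4 ke sum_high_eq[OF fin ST(2), of E k] by linarith
qed

lemma restr_full:
  assumes g: "graph V E" and md: "\<forall>v\<in>V. degree V E v \<ge> k"
  and RC: "\<forall>S T. S \<subseteq> V \<longrightarrow> T \<subseteq> V \<longrightarrow> S \<inter> T = {} \<longrightarrow>
       S \<subseteq> high V E k \<longrightarrow>
       (\<forall>Q \<in> odd_comps V E k S T. Q \<inter> high V E k \<noteq> {}) \<longrightarrow>
       k * card S + (\<Sum>v \<in> T \<inter> high V E k. degree V E v - k)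
         \<ge> q V E k S T + edges_between E S T"
  shows "\<forall>S T. S \<subseteq> V \<longrightarrow> T \<subseteq> V \<longrightarrow> S \<inter> T = {} \<longrightarrow>
       q V E k S T + edges_between E S T \<le> k * card S + (\<Sum>v \<in> T \<inter> high V E k. degree V E v - k)"
proof -
  have sym: "\<forall>u v. E u v \<longrightarrow> E v u" and fin: "finite V" and irr: "\<forall>v. \<not> E v v"
    and inV: "\<forall>u v. E u v \<longrightarrow> u \<in> V \<and> v \<in> V"
    using g unfolding graph_def by auto
  let ?H = "high V E k"
  let ?Sig = "\<lambda>T. (\<Sum>v \<in> T \<inter> ?H. degree V E v - k)"
  have main: "\<forall>S T. card (V - T) = n \<longrightarrow> S \<subseteq> V \<longrightarrow> T \<subseteq> V \<longrightarrow> S \<inter> T = {} \<longrightarrow>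
       q V E k S T + edges_between E S T \<le> k * card S + ?Sig T" for n
  proof (induction n rule: less_induct)
    case (less n)
    show ?case
    proof (intro allI impI)
      fix S T assume n: "card (V - T) = n" and ST: "S \<subseteq> V" "T \<subseteq> V" "S \<inter> T = {}"
      have finS: "finite S" "finite T" using finite_subset[OF ST(1) fin] finite_subset[OF ST(2) fin] by auto
      define R where "R = V - (S \<union> T)"
      have finR: "finite R" using fin unfolding R_def by auto
      have IH: "q V E k S' T' + edges_between E S' T' \<le> k * card S' + ?Sig T'"
        if "card (V - T') < n" "S' \<subseteq> V" "T' \<subseteq> V" "S' \<inter> T' = {}" for S' T'
        using less.IH that by blast
      show "q V E k S T + edges_between E S T \<le> k * card S + ?Sig T"
      proof (cases "S \<subseteq> ?H")
        case False
        then obtain v where v: "v \<in> S" "v \<notin> ?H" by auto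
        have vV: "v \<in> V" using v ST by auto
        have dv: "degree V E v = k" using v vV md unfolding high_def by fastforce
        define S' where "S' = S - {v}"
        define T' where "T' = insert v T"
        have vT: "v \<notin> T" using v ST by auto
        have ST': "S' \<subseteq> V" "T' \<subseteq> V" "S' \<inter> T' = {}" unfolding S'_def T'_def using ST vV by auto
        have lt: "card (V - T') < n"
        proof -
          have "V - T' = (V - T) - {v}" unfolding T'_def by auto
          moreover have "card (V - T) > 0" using vV vT fin by (auto simp: card_gt_0_iff)
          ultimately show ?thesis using n vV vT fin by simp
        qed
        have IH': "q V E k S' T' + edges_between E S' T' \<le> k * card S' + ?Sig T'"
          using IH[OF lt ST'] .
        have sig: "?Sig T' = ?Sig T" unfolding T'_def using v by (simp add: Int_insert_left)
        have R': "V - (S' \<union> T') = R" unfolding R_def S'_def T'_def using v by auto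
        define nS where "nS = card {u\<in>S. E v u}"
        define nT where "nT = card {u\<in>T. E v u}"
        define nR where "nR = card {u\<in>R. E v u}"
        have VSTR: "V = S \<union> T \<union> R" unfolding R_def using ST by auto
        have dsplit: "k = nS + nT + nR"
        proof -
          have "card (pr {v} V E) = card (pr {v} (S \<union> T) E) + card (pr {v} R E)"
            unfolding VSTR using pr_Un_r[of "{v}" "S \<union> T" R E] finS finR unfolding R_def by auto
          moreover have "card (pr {v} (S \<union> T) E) = card (pr {v} S E) + card (pr {v} T E)"
            using pr_Un_r[of "{v}" S T E] finS ST by auto
          ultimately show ?thesis using dv unfolding degree_def pr_single_l nS_def nT_def nR_def by simp
        qed
        have e1: "edges_between E S T = card (pr S' T E) + nT"
        proof -
          have "S = S' \<union> {v}" unfolding S'_def using v by auto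
          then have "card (pr S T E) = card (pr S' T E) + card (pr {v} T E)"
            using pr_Un_l[of S' "{v}" T E] finS unfolding S'_def by auto
          then show ?thesis unfolding eb_pr nT_def pr_single_l .
        qed
        have e2: "edges_between E S' T' = card (pr S' T E) + nS"
        proof -
          have "card (pr S' (T \<union> {v}) E) = card (pr S' T E) + card (pr S' {v} E)"
            using pr_Un_r[of S' T "{v}" E] finS vT unfolding S'_def by auto
          moreover have "card (pr S' {v} E) = nS"
          proof -
            have "{u\<in>S'. E u v} = {u\<in>S. E v u}" unfolding S'_def using sym irr by auto
            then show ?thesis unfolding pr_single_r nS_def by simp
          qed
          ultimately show ?thesis unfolding eb_pr T'_def by simp
        qed
        have qq: "q V E k S T \<le> q V E k S' T' + nR"
        proof -
          let ?B = "{Q \<in> components R E. \<exists>u\<in>Q. E v u}"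
          have sub: "odd_comps V E k S T \<subseteq> odd_comps V E k S' T' \<union> ?B"
          proof
            fix Q assume QO: "Q \<in> odd_comps V E k S T"
            have Q: "Q \<in> components R E" using QO unfolding odd_comps_def R_def by auto
            have finQ: "finite Q" using components_sub[OF Q] finR finite_subset by auto
            show "Q \<in> odd_comps V E k S' T' \<union> ?B"
            proof (cases "\<exists>u\<in>Q. E v u")
              case True then show ?thesis using Q by auto
            next
              case False
              have "edges_between E Q T' = edges_between E Q T"
              proof -
                have "card (pr Q (T \<union> {v}) E) = card (pr Q T E) + card (pr Q {v} E)"
                  using pr_Un_r[of Q T "{v}" E] finS finQ vT by auto
                moreover have "{u\<in>Q. E u v} = {}" using False sym by auto
                ultimately show ?thesis unfolding eb_pr T'_def pr_single_r by simp
              qed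
              then show ?thesis using QO R' unfolding odd_comps_def R_def by auto
            qed
          qed
          have "?B \<subseteq> comp R E ` {u\<in>R. E v u}"
          proof
            fix Q assume Q: "Q \<in> ?B"
            then obtain u where u: "u \<in> Q" "E v u" by auto
            have "u \<in> R" using u Q components_sub by blast
            moreover have "Q = comp R E u" using comp_mem_eq[OF sym] Q u by auto
            ultimately show "Q \<in> comp R E ` {u\<in>R. E v u}" using u by auto
          qed
          note Bsub = this
          have f: "finite {u\<in>R. E v u}" using finR by auto
          have "card ?B \<le> card (comp R E ` {u\<in>R. E v u})" by (rule card_mono[OF finite_imageI[OF f] Bsub])
          also have "\<dots> \<le> card {u\<in>R. E v u}" by (rule card_image_le[OF f])
          finally have cB: "card ?B \<le> nR" unfolding nR_def .
          have fO: "finite (odd_comps V E k S' T')" unfolding odd_comps_def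
            using components_finite[of "V - (S' \<union> T')" E] fin by auto
          have fB: "finite ?B" using components_finite[OF finR, of E] by auto
          have "q V E k S T \<le> card (odd_comps V E k S' T' \<union> ?B)"
            unfolding q_def using sub fO fB by (simp add: card_mono)
          also have "\<dots> \<le> q V E k S' T' + card ?B" unfolding q_def by (rule card_Un_le)
          finally show ?thesis using cB by linarith
        qed
        have cS: "card S = Suc (card S')" unfolding S'_def using card_Suc_Diff1[OF finS(1) v(1)] by simp
        show ?thesis using IH' sig e1 e2 qq dsplit cS by (simp add: algebra_simps)
      next
        case SH: True
        show ?thesis
        proof (cases "\<exists>Q\<in>odd_comps V E k S T. Q \<inter> ?H = {}")
          case False
          then show ?thesis using RC ST SH by auto
        next
          case True
          then obtain Q where QO: "Q \<in> odd_comps V E k S T" and QH: "Q \<inter> ?H = {}" by auto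
          have Q: "Q \<in> components R E" and odd: "odd (k * card Q + edges_between E Q T)"
            using QO unfolding odd_comps_def R_def by auto
          have QR: "Q \<subseteq> R" using components_sub[OF Q] .
          have finQ: "finite Q" using QR finR finite_subset by auto
          have Qne: "Q \<noteq> {}" using components_ne[OF Q] .
          define T' where "T' = T \<union> Q"
          have ST': "S \<subseteq> V" "T' \<subseteq> V" "S \<inter> T' = {}" using ST QR unfolding T'_def R_def by auto
          have lt: "card (V - T') < n"
          proof -
            have "V - T' \<subset> V - T" using Qne QR unfolding T'_def R_def by auto
            moreover have "finite (V - T)" using fin by auto
            ultimately show ?thesis using n psubset_card_mono by blast
          qed
          have IH': "q V E k S T' + edges_between E S T' \<le> k * card S + ?Sig T'" using IH[OF lt ST'] .
          have sig: "?Sig T' = ?Sig T"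
          proof -
            have "T' \<inter> ?H = T \<inter> ?H" unfolding T'_def using QH by auto
            then show ?thesis by simp
          qed
          have QT: "Q \<inter> T = {}" using QR unfolding R_def by auto
          have e': "edges_between E S T' = edges_between E S T + card (pr S Q E)"
            unfolding eb_pr T'_def using pr_Un_r[of S T Q E] finS finQ QT by auto
          have R': "V - (S \<union> T') = R - Q" unfolding R_def T'_def by auto
          have comps': "components (V - (S \<union> T')) E = components R E - {Q}"
            unfolding R' using comps_remove[OF sym Q] .
          have oc': "odd_comps V E k S T' = odd_comps V E k S T - {Q}"
          proof -
            have "edges_between E Q' T' = edges_between E Q' T" if Q': "Q' \<in> components R E" "Q' \<noteq> Q" for Q'
            proof -
              have finQ': "finite Q'" using components_sub[OF Q'(1)] finR finite_subset by auto
              have "pr Q' Q E = {}"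
              proof -
                have "Q' \<inter> Q = {}" using components_disj[OF sym Q'(1) Q] Q'(2) by auto
                moreover have "closed R E Q'" using components_closed[OF Q'(1)] .
                ultimately show ?thesis using QR unfolding pr_def closed_def by blast
              qed
              then show ?thesis unfolding eb_pr T'_def using pr_Un_r[of Q' T Q E] finQ' finS finQ QT by auto
            qed
            note eqE = this
            show ?thesis
            proof (rule set_eqI)
              fix Q'
              have "Q' \<in> odd_comps V E k S T' \<longleftrightarrow>
                  Q' \<in> components R E \<and> Q' \<noteq> Q \<and> odd (k * card Q' + edges_between E Q' T')"
                unfolding odd_comps_def comps' by auto
              also have "\<dots> \<longleftrightarrow> Q' \<in> components R E \<and> Q' \<noteq> Q \<and> odd (k * card Q' + edges_between E Q' T)"
              proof (cases "Q' \<in> components R E \<and> Q' \<noteq> Q")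
                case True then show ?thesis using eqE by simp
              next
                case False then show ?thesis by blast
              qed
              also have "\<dots> \<longleftrightarrow> Q' \<in> odd_comps V E k S T - {Q}" unfolding odd_comps_def R_def by auto
              finally show "Q' \<in> odd_comps V E k S T' \<longleftrightarrow> Q' \<in> odd_comps V E k S T - {Q}" .
            qed
          qed
          have qq: "q V E k S T = Suc (q V E k S T')"
          proof -
            have fO: "finite (odd_comps V E k S T)" unfolding odd_comps_def
              using components_finite[of "V - (S \<union> T)" E] fin by auto
            show ?thesis unfolding q_def oc' using card_Suc_Diff1[OF fO QO] by simp
          qed
          have pos: "card (pr S Q E) \<ge> 1"
          proof -
            have QV: "Q \<subseteq> V" using QR unfolding R_def by auto
            have dQ: "\<forall>v\<in>Q. degree V E v = k" using QH QV md unfolding high_def by fastforce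
            have "card (pr Q V E) = (\<Sum>v\<in>Q. card {b\<in>V. E v b})" using card_pr_sum[OF finQ fin] .
            also have "\<dots> = (\<Sum>v\<in>Q. k)" using dQ unfolding degree_def by (intro sum.cong) auto
            finally have c1: "card (pr Q V E) = k * card Q" by simp
            have c2: "card (pr Q V E) = card (pr Q Q E) + card (pr Q S E) + card (pr Q T E)"
              using nbr_split[OF fin ST _ , of Q E E] Q unfolding R_def by auto
            have ev: "even (card (pr Q Q E))" using pr_even[OF finQ] sym irr by auto
            obtain a where a: "card (pr Q Q E) = 2 * a" using ev by (auto elim: evenE)
            have oddk: "odd (k * card Q + card (pr Q T E))" using odd unfolding eb_pr .
            have sm: "k * card Q + card (pr Q T E) = 2 * a + card (pr Q S E) + 2 * card (pr Q T E)"
              using c1 c2 a by simp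
            have "odd (2 * a + card (pr Q S E) + 2 * card (pr Q T E))"
              using oddk unfolding sm .
            then have "odd (card (pr Q S E))" by presburger
            then have "card (pr Q S E) \<noteq> 0" by (intro notI) simp
            then show ?thesis using pr_swap_sym[OF sym, of S Q] by simp
          qed
          show ?thesis using IH' sig e' qq pos by linarith
        qed
      qed
    qed
  qed
  show ?thesis using main by blast
qed

theorem lemma5:
  fixes V :: "'a set" and E :: "'a \<Rightarrow> 'a \<Rightarrow> bool" and k :: nat
  assumes "graph V E" and "k \<ge> 1" and "min_degree_eq V E k"
  shows "has_k_factor V E k \<longleftrightarrow>
    (\<forall>S T. S \<subseteq> V \<longrightarrow> T \<subseteq> V \<longrightarrow> S \<inter> T = {} \<longrightarrow>
       S \<subseteq> high V E k \<longrightarrow>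
       (\<forall>Q \<in> odd_comps V E k S T. Q \<inter> high V E k \<noteq> {}) \<longrightarrow>
       k * card S + (\<Sum>v \<in> T \<inter> high V E k. degree V E v - k)
         \<ge> q V E k S T + edges_between E S T)"
proof
  have md: "\<forall>v\<in>V. degree V E v \<ge> k" using assms(3) unfolding min_degree_eq_def by auto
  {
    assume "has_k_factor V E k"
    then obtain F where F0: "(\<forall>u v. F u v \<longrightarrow> E u v) \<and> graph V F \<and> (\<forall>v\<in>V. degree V F v = k)"
      unfolding has_k_factor_def by (rule exE)
    then have F: "\<forall>u v. F u v \<longrightarrow> E u v" "graph V F" "\<forall>v\<in>V. degree V F v = k" by auto
    show "\<forall>S T. S \<subseteq> V \<longrightarrow> T \<subseteq> V \<longrightarrow> S \<inter> T = {} \<longrightarrow>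
       S \<subseteq> high V E k \<longrightarrow>
       (\<forall>Q \<in> odd_comps V E k S T. Q \<inter> high V E k \<noteq> {}) \<longrightarrow>
       k * card S + (\<Sum>v \<in> T \<inter> high V E k. degree V E v - k)
         \<ge> q V E k S T + edges_between E S T"
    proof (intro allI impI)
      fix S T assume ST: "S \<subseteq> V" "T \<subseteq> V" "S \<inter> T = {}"
      show "k * card S + (\<Sum>v \<in> T \<inter> high V E k. degree V E v - k) \<ge> q V E k S T + edges_between E S T"
        using nec[OF assms(1) F ST] by simp
    qed
  }
  {
    assume RC: "\<forall>S T. S \<subseteq> V \<longrightarrow> T \<subseteq> V \<longrightarrow> S \<inter> T = {} \<longrightarrow>
       S \<subseteq> high V E k \<longrightarrow>
       (\<forall>Q \<in> odd_comps V E k S T. Q \<inter> high V E k \<noteq> {}) \<longrightarrow>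
       k * card S + (\<Sum>v \<in> T \<inter> high V E k. degree V E v - k)
         \<ge> q V E k S T + edges_between E S T"
    show "has_k_factor V E k"
      using suff[OF assms(1,2) md restr_full[OF assms(1) md RC]] .
  }
qed


end
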